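(* Let $G$ be a connected graph with $n\geq 2$ vertices and $m$ edges. Then for every integer $k\geq 0$, $$R(S^k(G))=2^kR(G)+\frac{4^{k}-2^{k}}{2}R^+(G)+\frac{8^{k}-2\cdot 4^{k}+2^{k}}{4}R^*(G)+\frac{8^k-2^k}{12}m(2m-2n+1)-\frac{4^k-1}{6}(m-n)(m-n+1).$$
   Context: All graphs are finite, undirected, without loops or multiple edges. For a connected graph $H$ and vertices $i,j$, the resistance distance $\Omega_{ij}$ is the effective resistance between $i$ and $j$ in the electrical network obtained from $H$ by replacing each edge by a unit resistor. With $d_i$ the degree of vertex $i$ in $H$ and sums over unordered pairs of distinct vertices of $H$: $R(H)=\sum_{\{i,j\}\subseteq V(H)}\Omega_{ij}$ (Kirchhoff index), $R^+(H)=\sum_{\{i,j\}\subseteq V(H)}(d_i+d_j)\Omega_{ij}$ (additive degree-Kirchhoff index), and $R^*(H)=\sum_{\{i,j\}\subseteq V(H)}d_id_j\Omega_{ij}$ (multiplicative degree-Kirchhoff index). The subdivision $S(H)$ is the graph obtained from $H$ by replacing every edge with a path of length two. Iterated subdivisions: $S^0(G)=G$ and $S^k(G)=S(S^{k-1}(G))$ for $k\geq1$. *)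

theory Defs
  imports Complex_Main "HOL-Library.FSet"
begin

text \<open>Vertex type closed under subdivision: original vertices and
  subdivision vertices, the latter labelled by the (finite) edge they subdivide.\<close>
datatype 'a sv = Old 'a | Mid "'a sv fset"

definition graph :: "'a set \<Rightarrow> 'a set set \<Rightarrow> bool" where
  "graph V E \<longleftrightarrow> finite V \<and> (\<forall>e\<in>E. e \<subseteq> V \<and> card e = 2)"

definition adj :: "'a set set \<Rightarrow> 'a \<Rightarrow> 'a \<Rightarrow> bool" where
  "adj E u v \<longleftrightarrow> u \<noteq> v \<and> {u, v} \<in> E"

definition connected_graph :: "'a set \<Rightarrow> 'a set set \<Rightarrow> bool" where
  "connected_graph V E \<longleftrightarrow> graph V E \<and> V \<noteq> {} \<and>
     (\<forall>u\<in>V. \<forall>v\<in>V. (adj E)\<^sup>*\<^sup>* u v)"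

definition degree :: "'a set set \<Rightarrow> 'a \<Rightarrow> nat" where
  "degree E v = card {e \<in> E. v \<in> e}"

text \<open>Effective resistance with unit resistors: inject a unit current at i and
  extract it at j; the node potentials phi satisfy Kirchhoff's current law
  (net current out of v equals external injection at v), and the resistance is
  the potential difference phi i - phi j (independent of the choice of phi
  for a connected graph).\<close>
definition resistance :: "'a set \<Rightarrow> 'a set set \<Rightarrow> 'a \<Rightarrow> 'a \<Rightarrow> real" where
  "resistance V E i j = (THE r. \<exists>\<phi> :: 'a \<Rightarrow> real.
      (\<forall>v\<in>V. (\<Sum>u\<in>{u\<in>V. adj E v u}. \<phi> v - \<phi> u)
               = (if v = i then 1 else 0) - (if v = j then 1 else 0))
      \<and> r = \<phi> i - \<phi> j)"

text \<open>Sums over unordered pairs {i,j} of distinct vertices, written as half of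
  the sum over ordered pairs (all summands are symmetric in i, j).\<close>
definition kirchhoff :: "'a set \<Rightarrow> 'a set set \<Rightarrow> real" where
  "kirchhoff V E = (\<Sum>i\<in>V. \<Sum>j\<in>V - {i}. resistance V E i j) / 2"

definition add_deg_kirchhoff :: "'a set \<Rightarrow> 'a set set \<Rightarrow> real" where
  "add_deg_kirchhoff V E = (\<Sum>i\<in>V. \<Sum>j\<in>V - {i}.
      (real (degree E i) + real (degree E j)) * resistance V E i j) / 2"

definition mult_deg_kirchhoff :: "'a set \<Rightarrow> 'a set set \<Rightarrow> real" where
  "mult_deg_kirchhoff V E = (\<Sum>i\<in>V. \<Sum>j\<in>V - {i}.
      (real (degree E i) * real (degree E j)) * resistance V E i j) / 2"

definition subdiv :: "'a sv set \<times> 'a sv set set \<Rightarrow> 'a sv set \<times> 'a sv set set" where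
  "subdiv G = (fst G \<union> (\<lambda>e. Mid (Abs_fset e)) ` snd G,
               {{u, Mid (Abs_fset e)} | u e. e \<in> snd G \<and> u \<in> e})"

definition embed :: "'a set \<Rightarrow> 'a set set \<Rightarrow> 'a sv set \<times> 'a sv set set" where
  "embed V E = (Old ` V, (\<lambda>e. Old ` e) ` E)"

definition iter_subdiv :: "nat \<Rightarrow> 'a set \<Rightarrow> 'a set set \<Rightarrow> 'a sv set \<times> 'a sv set set" where
  "iter_subdiv k V E = (subdiv ^^ k) (embed V E)"

end

theory Submission
  imports Defs "Jordan_Normal_Form.Determinant"
begin
lemma lin_solve:
  fixes c :: "'a \<Rightarrow> 'a \<Rightarrow> real"
  assumes fin: "finite V"
    and inj: "\<And>x. (\<forall>v\<in>V. (\<Sum>u\<in>V. c v u * x u) = 0) \<Longrightarrow> (\<forall>v\<in>V. x v = 0)"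
  shows "\<exists>x. \<forall>v\<in>V. (\<Sum>u\<in>V. c v u * x u) = b v"
proof -
  define n where "n = card V"
  obtain f where f: "bij_betw f {0..<n} V" using ex_bij_betw_nat_finite[OF fin] n_def by blast
  define g where "g = inv_into {0..<n} f"
  have g: "bij_betw g V {0..<n}" using f g_def by (simp add: bij_betw_inv_into)
  have fg: "\<And>u. u \<in> V \<Longrightarrow> f (g u) = u" using f g_def by (simp add: bij_betw_inv_into_right)
  have gf: "\<And>i. i < n \<Longrightarrow> g (f i) = i" using f g_def bij_betw_inv_into_left by fastforce
  have fV: "\<And>i. i < n \<Longrightarrow> f i \<in> V" using f bij_betwE by fastforce
  define A :: "real mat" where "A = mat n n (\<lambda>(i,j). c (f i) (f j))"
  have A: "A \<in> carrier_mat n n" unfolding A_def by simp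
  have key: "\<And>y i. dim_vec y = n \<Longrightarrow> i < n \<Longrightarrow> (A *\<^sub>v y) $ i = (\<Sum>u\<in>V. c (f i) u * y $ g u)"
  proof -
    fix y :: "real vec" and i assume y: "dim_vec y = n" and i: "i < n"
    have "(A *\<^sub>v y) $ i = (\<Sum>j\<in>{0..<n}. c (f i) (f j) * y $ j)"
      using i y unfolding A_def by (simp add: scalar_prod_def)
    also have "\<dots> = (\<Sum>j\<in>{0..<n}. c (f i) (f j) * y $ g (f j))"
      by (rule sum.cong) (auto simp: gf)
    also have "\<dots> = (\<Sum>u\<in>V. c (f i) u * y $ g u)"
      by (rule sum.reindex_bij_betw[OF f])
    finally show "(A *\<^sub>v y) $ i = (\<Sum>u\<in>V. c (f i) u * y $ g u)" .
  qed
  have "det A \<noteq> 0"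
  proof
    assume "det A = 0"
    then obtain v where v: "v \<in> carrier_vec n" "v \<noteq> 0\<^sub>v n" "A *\<^sub>v v = 0\<^sub>v n"
      using det_0_iff_vec_prod_zero_field[OF A] by blast
    define x where "x u = v $ g u" for u
    have "\<forall>w\<in>V. (\<Sum>u\<in>V. c w u * x u) = 0"
    proof
      fix w assume w: "w \<in> V"
      have gw: "g w < n" using g w bij_betwE by fastforce
      have "(A *\<^sub>v v) $ g w = 0" using v(3) gw by simp
      thus "(\<Sum>u\<in>V. c w u * x u) = 0" using key[of v "g w"] v(1) gw fg[OF w] x_def by simp
    qed
    hence x0: "\<forall>w\<in>V. x w = 0" using inj by blast
    have "v = 0\<^sub>v n"
    proof (rule eq_vecI)
      fix i assume "i < dim_vec (0\<^sub>v n :: real vec)"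
      hence i: "i < n" by simp
      have "v $ i = x (f i)" using x_def gf[OF i] by simp
      thus "v $ i = 0\<^sub>v n $ i" using x0 fV[OF i] i by simp
    qed (use v(1) in simp)
    thus False using v(2) by simp
  qed
  from det_non_zero_imp_unit[OF A this, of "()"]
  obtain B where B: "B \<in> carrier_mat n n" "A * B = 1\<^sub>m n"
    unfolding Units_def ring_mat_def by auto
  define bb where "bb = vec n (\<lambda>i. b (f i))"
  define y where "y = B *\<^sub>v bb"
  have dy: "dim_vec y = n" using B y_def by simp
  have Ay: "A *\<^sub>v y = bb" unfolding y_def
    using assoc_mult_mat_vec[OF A B(1), of bb] B(2) bb_def by simp
  show ?thesis
  proof (intro exI ballI)
    fix w assume w: "w \<in> V"
    have gw: "g w < n" using g w bij_betwE by fastforce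
    have "(\<Sum>u\<in>V. c w u * y $ g u) = (A *\<^sub>v y) $ g w" using key[OF dy gw] fg[OF w] by simp
    also have "\<dots> = b w" using Ay gw fg[OF w] bb_def by simp
    finally show "(\<Sum>u\<in>V. c w u * (\<lambda>u. y $ g u) u) = b w" by simp
  qed
qed

definition nbrs :: "'a set \<Rightarrow> 'a set set \<Rightarrow> 'a \<Rightarrow> 'a set" where
  "nbrs V E v = {u\<in>V. adj E v u}"

definition lap :: "'a set \<Rightarrow> 'a set set \<Rightarrow> ('a \<Rightarrow> real) \<Rightarrow> 'a \<Rightarrow> real" where
  "lap V E \<phi> v = (\<Sum>u\<in>nbrs V E v. \<phi> v - \<phi> u)"

lemma adj_sym: "adj E u v = adj E v u"
  unfolding adj_def by (auto simp: insert_commute)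

locale cg =
  fixes V :: "'a set" and E :: "'a set set"
  assumes conn: "connected_graph V E"
begin

abbreviation "N \<equiv> nbrs V E"
abbreviation "L \<equiv> lap V E"
abbreviation "\<Omega> \<equiv> resistance V E"

lemma finV: "finite V" using conn unfolding connected_graph_def graph_def by auto
lemma edge: "e \<in> E \<Longrightarrow> e \<subseteq> V \<and> card e = 2" using conn unfolding connected_graph_def graph_def by auto
lemma finN: "finite (N v)" unfolding nbrs_def using finV by auto
lemma N_sub: "N v \<subseteq> V" unfolding nbrs_def by auto
lemma adjV: "adj E u v \<Longrightarrow> u \<in> V \<and> v \<in> V" unfolding adj_def using edge by auto

lemma harmonic_const:
  assumes h: "\<forall>v\<in>V. L \<phi> v = 0" and u: "u \<in> V" and w: "w \<in> V"
  shows "\<phi> u = \<phi> w"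
proof -
  have ne: "V \<noteq> {}" using u by auto
  define M where "M = Max (\<phi> ` V)"
  have "M \<in> \<phi> ` V" unfolding M_def using finV ne by (intro Max_in) auto
  then obtain v0 where v0: "v0 \<in> V" "\<phi> v0 = M" by (metis imageE)
  have le: "\<And>x. x \<in> V \<Longrightarrow> \<phi> x \<le> M" unfolding M_def using finV by auto
  have stepM: "\<phi> z = M" if yV: "y \<in> V" and yM: "\<phi> y = M" and a: "adj E y z" for y z
  proof -
    have zV: "z \<in> V" using adjV[OF a] by simp
    have zN: "z \<in> N y" using zV a unfolding nbrs_def by simp
    have s0: "(\<Sum>u\<in>N y. \<phi> y - \<phi> u) = 0" using h yV unfolding lap_def by simp
    have nn: "\<And>u. u \<in> N y \<Longrightarrow> 0 \<le> \<phi> y - \<phi> u"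
    proof -
      fix u assume "u \<in> N y"
      hence "u \<in> V" using N_sub by blast
      thus "0 \<le> \<phi> y - \<phi> u" using le[of u] yM by simp
    qed
    have "(\<Sum>u\<in>N y. \<phi> y - \<phi> u) = 0 \<longleftrightarrow> (\<forall>u\<in>N y. \<phi> y - \<phi> u = 0)"
      by (rule sum_nonneg_eq_0_iff[OF finN]) (rule nn)
    hence "\<phi> y - \<phi> z = 0" using s0 zN by blast
    thus ?thesis using yM by simp
  qed
  have all: "x \<in> V \<and> \<phi> x = M" if "(adj E)\<^sup>*\<^sup>* v0 x" for x
    using that
  proof (induction rule: rtranclp_induct)
    case base then show ?case using v0 by simp
  next
    case (step y z)
    hence "y \<in> V" "\<phi> y = M" "adj E y z" by simp_all
    then show ?case using stepM[of y z] adjV[of y z] by simp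
  qed
  have cc: "\<forall>a\<in>V. \<forall>b\<in>V. (adj E)\<^sup>*\<^sup>* a b" using conn unfolding connected_graph_def by simp
  have "\<phi> u = M" using all cc v0(1) u by blast
  moreover have "\<phi> w = M" using all cc v0(1) w by blast
  ultimately show ?thesis by simp
qed

lemma lap_sum_zero: "(\<Sum>v\<in>V. L \<phi> v) = 0"
proof -
  define P where "P = (\<Sum>v\<in>V. \<Sum>u\<in>{u\<in>V. adj E v u}. \<phi> v - \<phi> u)"
  have "P = (\<Sum>u\<in>V. \<Sum>v\<in>{v\<in>V. adj E v u}. \<phi> v - \<phi> u)"
    unfolding P_def by (rule sum.swap_restrict[OF finV finV, where g = "\<lambda>v u. \<phi> v - \<phi> u" and R = "\<lambda>v u. adj E v u"])
  also have "\<dots> = (\<Sum>u\<in>V. \<Sum>v\<in>{v\<in>V. adj E u v}. \<phi> v - \<phi> u)"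
  proof -
    have "\<And>u. {v\<in>V. adj E v u} = {v\<in>V. adj E u v}" by (metis adj_sym)
    thus ?thesis by (simp only:)
  qed
  also have "\<dots> = (\<Sum>u\<in>V. \<Sum>v\<in>{v\<in>V. adj E u v}. - (\<phi> u - \<phi> v))"
    by simp
  also have "\<dots> = - P" unfolding P_def by (simp only: sum_negf)
  finally have "P = 0" by simp
  thus ?thesis unfolding lap_def nbrs_def P_def .
qed

lemma lap_eq: "v \<in> V \<Longrightarrow> L \<phi> v = (\<Sum>u\<in>V. ((if u = v then real (card (N v)) else 0) - (if adj E v u then 1 else 0)) * \<phi> u)"
proof -
  assume v: "v \<in> V"
  have "(\<Sum>u\<in>V. ((if u = v then real (card (N v)) else 0) - (if adj E v u then 1 else 0)) * \<phi> u)
     = (\<Sum>u\<in>V. (if u = v then real (card (N v)) * \<phi> v else 0)) - (\<Sum>u\<in>V. if adj E v u then \<phi> u else 0)"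
    by (subst sum_subtractf[symmetric], rule sum.cong) (auto simp: adj_def)
  also have "(\<Sum>u\<in>V. (if u = v then real (card (N v)) * \<phi> v else 0)) = real (card (N v)) * \<phi> v"
    using v finV by simp
  also have "(\<Sum>u\<in>V. if adj E v u then \<phi> u else 0) = (\<Sum>u\<in>N v. \<phi> u)"
    unfolding nbrs_def by (rule sum.inter_filter[OF finV, symmetric])
  also have "real (card (N v)) * \<phi> v - (\<Sum>u\<in>N v. \<phi> u) = L \<phi> v"
    unfolding lap_def by (simp add: sum_subtractf)
  finally show ?thesis by simp
qed

lemma exist:
  assumes c: "(\<Sum>v\<in>V. c v) = 0"
  shows "\<exists>\<phi>. \<forall>v\<in>V. L \<phi> v = c v"
proof -
  define C where "C v u = ((if u = v then real (card (N v)) else 0) - (if adj E v u then 1 else 0)) + 1" for v u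
  have Ceq: "(\<Sum>u\<in>V. C v u * x u) = L x v + (\<Sum>u\<in>V. x u)" if "v \<in> V" for v x
    unfolding C_def using lap_eq[OF that, of x] by (simp add: distrib_right sum.distrib)
  have "\<exists>x. \<forall>v\<in>V. (\<Sum>u\<in>V. C v u * x u) = c v"
  proof (rule lin_solve[OF finV])
    fix x assume h: "\<forall>v\<in>V. (\<Sum>u\<in>V. C v u * x u) = 0"
    have "(\<Sum>v\<in>V. L x v + (\<Sum>u\<in>V. x u)) = 0" using h Ceq by simp
    hence "real (card V) * (\<Sum>u\<in>V. x u) = 0" using lap_sum_zero[of x] by (simp add: sum.distrib)
    hence s0: "(\<Sum>u\<in>V. x u) = 0" if "V \<noteq> {}" using finV that by simp
    have Lx: "\<forall>v\<in>V. L x v = 0"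
    proof
      fix v assume v: "v \<in> V"
      hence "(\<Sum>u\<in>V. x u) = 0" using s0 by blast
      thus "L x v = 0" using h v Ceq[OF v, of x] by simp
    qed
    show "\<forall>v\<in>V. x v = 0"
    proof
      fix v assume v: "v \<in> V"
      have "\<forall>u\<in>V. x u = x v" using harmonic_const[OF Lx] v by blast
      hence "(\<Sum>u\<in>V. x u) = real (card V) * x v" by simp
      moreover have "(\<Sum>u\<in>V. x u) = 0" using s0 v by blast
      moreover have "real (card V) \<noteq> 0" using finV v by auto
      ultimately show "x v = 0" by simp
    qed
  qed
  then obtain x where x: "\<forall>v\<in>V. (\<Sum>u\<in>V. C v u * x u) = c v" by blast
  have "(\<Sum>v\<in>V. L x v + (\<Sum>u\<in>V. x u)) = 0" using x Ceq c by simp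
  hence "real (card V) * (\<Sum>u\<in>V. x u) = 0" using lap_sum_zero[of x] by (simp add: sum.distrib)
  hence s0: "V \<noteq> {} \<Longrightarrow> (\<Sum>u\<in>V. x u) = 0" using finV by simp
  show ?thesis
  proof (intro exI[of _ x] ballI)
    fix v assume v: "v \<in> V"
    hence "V \<noteq> {}" by auto
    with s0 have "(\<Sum>u\<in>V. x u) = 0" by blast
    thus "L x v = c v" using x v Ceq[OF v, of x] by simp
  qed
qed

lemma lap_diff: "L (\<lambda>x. f x - g x) v = L f v - L g v"
  unfolding lap_def by (simp add: sum_subtractf[symmetric] algebra_simps)

lemma res_char:
  assumes i: "i \<in> V" and j: "j \<in> V"
    and \<phi>: "\<forall>v\<in>V. L \<phi> v = (if v = i then 1 else 0) - (if v = j then 1 else 0)"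
  shows "\<Omega> i j = \<phi> i - \<phi> j"
  unfolding resistance_def
proof (rule the_equality)
  show "\<exists>\<phi>'. (\<forall>v\<in>V. (\<Sum>u\<in>{u \<in> V. adj E v u}. \<phi>' v - \<phi>' u) = (if v = i then 1 else 0) - (if v = j then 1 else 0)) \<and> \<phi> i - \<phi> j = \<phi>' i - \<phi>' j"
    using \<phi> unfolding lap_def nbrs_def by (intro exI[of _ \<phi>]) simp
next
  fix r :: real assume "\<exists>\<phi>'. (\<forall>v\<in>V. (\<Sum>u\<in>{u \<in> V. adj E v u}. \<phi>' v - \<phi>' u) = (if v = i then 1 else 0) - (if v = j then 1 else 0)) \<and> r = \<phi>' i - \<phi>' j"
  then obtain \<phi>' where p0: "\<forall>v\<in>V. (\<Sum>u\<in>{u \<in> V. adj E v u}. \<phi>' v - \<phi>' u) = (if v = i then 1 else 0) - (if v = j then 1 else 0)" and r: "r = \<phi>' i - \<phi>' j"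
    by blast
  have p: "\<forall>v\<in>V. L \<phi>' v = (if v = i then 1 else 0) - (if v = j then 1 else 0)"
    using p0 unfolding lap_def nbrs_def by simp
  have "\<forall>v\<in>V. L (\<lambda>x. \<phi>' x - \<phi> x) v = 0" using p \<phi> lap_diff by simp
  hence "\<phi>' i - \<phi> i = \<phi>' j - \<phi> j" using harmonic_const[of "\<lambda>x. \<phi>' x - \<phi> x"] i j by blast
  thus "r = \<phi> i - \<phi> j" using r by simp
qed

definition pot :: "'a \<Rightarrow> 'a \<Rightarrow> 'a \<Rightarrow> real" where
  "pot g y = (SOME \<phi>. \<forall>v\<in>V. L \<phi> v = (if v = y then 1 else 0) - (if v = g then 1 else 0))"

lemma pot: assumes "g \<in> V" "y \<in> V"
  shows "\<forall>v\<in>V. L (pot g y) v = (if v = y then 1 else 0) - (if v = g then 1 else 0)"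
proof -
  have "(\<Sum>v\<in>V. (if v = y then 1 else 0) - (if v = g then (1::real) else 0)) = 0"
    using assms finV by (simp add: sum_subtractf)
  from exist[OF this] show ?thesis unfolding pot_def by (rule someI_ex)
qed

lemma res_pot: assumes g: "g \<in> V" and x: "x \<in> V" and y: "y \<in> V"
  shows "\<Omega> x y = pot g x x - pot g y x - pot g x y + pot g y y"
proof -
  have "\<forall>v\<in>V. L (\<lambda>z. pot g x z - pot g y z) v = (if v = x then 1 else 0) - (if v = y then 1 else 0)"
    using pot[OF g x] pot[OF g y] lap_diff by simp
  from res_char[OF x y this] show ?thesis by simp
qed

lemma res_self: "x \<in> V \<Longrightarrow> \<Omega> x x = 0"
  using res_char[of x x "\<lambda>_. 0"] unfolding lap_def by simp

lemma res_sym: "x \<in> V \<Longrightarrow> y \<in> V \<Longrightarrow> \<Omega> x y = \<Omega> y x"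
proof -
  assume a: "x \<in> V" "y \<in> V"
  show ?thesis using res_pot[OF a(1) a(1) a(2)] res_pot[OF a(1) a(2) a(1)] by linarith
qed

end

context cg
begin

lemma finE: "finite E"
proof -
  have "E \<subseteq> Pow V" using edge by auto
  thus ?thesis using finV finite_subset by blast
qed

lemma fine: "e \<in> E \<Longrightarrow> finite e" using edge finV finite_subset by blast

lemma nsum_swap: "(\<Sum>v\<in>V. \<Sum>u\<in>N v. f v u) = (\<Sum>v\<in>V. \<Sum>u\<in>N v. f u v)"
proof -
  have "(\<Sum>v\<in>V. \<Sum>u\<in>N v. f v u) = (\<Sum>v\<in>V. \<Sum>u\<in>{u\<in>V. adj E v u}. f v u)"
    unfolding nbrs_def ..
  also have "\<dots> = (\<Sum>u\<in>V. \<Sum>v\<in>{v\<in>V. adj E v u}. f v u)"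
    by (rule sum.swap_restrict[OF finV finV, where g = "\<lambda>v u. f v u" and R = "\<lambda>v u. adj E v u"])
  also have "\<dots> = (\<Sum>u\<in>V. \<Sum>v\<in>{v\<in>V. adj E u v}. f v u)"
  proof -
    have "\<And>u. {v\<in>V. adj E v u} = {v\<in>V. adj E u v}" by (metis adj_sym)
    thus ?thesis by (simp only:)
  qed
  finally show ?thesis unfolding nbrs_def .
qed

lemma lap_sum: "finite A \<Longrightarrow> L (\<lambda>z. \<Sum>y\<in>A. a y * f y z) v = (\<Sum>y\<in>A. a y * L (f y) v)"
proof -
  assume A: "finite A"
  have "L (\<lambda>z. \<Sum>y\<in>A. a y * f y z) v = (\<Sum>u\<in>N v. \<Sum>y\<in>A. a y * (f y v - f y u))"
    unfolding lap_def by (simp add: sum_subtractf[symmetric] right_diff_distrib)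
  also have "\<dots> = (\<Sum>y\<in>A. \<Sum>u\<in>N v. a y * (f y v - f y u))" by (rule sum.swap)
  also have "\<dots> = (\<Sum>y\<in>A. a y * L (f y) v)" unfolding lap_def by (simp add: sum_distrib_left)
  finally show ?thesis .
qed

lemma QF:
  assumes c: "(\<Sum>v\<in>V. c v) = 0" and \<phi>: "\<forall>v\<in>V. L \<phi> v = c v"
  shows "(\<Sum>x\<in>V. c x * \<phi> x) = - (1/2) * (\<Sum>x\<in>V. \<Sum>y\<in>V. c x * c y * \<Omega> x y)"
proof (cases "V = {}")
  case True then show ?thesis by simp
next
  case False
  then obtain g where g: "g \<in> V" by blast
  define P where "P = pot g"
  define \<chi> where "\<chi> z = (\<Sum>y\<in>V. c y * P y z)" for z
  have L\<chi>: "L \<chi> v = c v" if v: "v \<in> V" for v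
  proof -
    have "L \<chi> v = (\<Sum>y\<in>V. c y * L (P y) v)" unfolding \<chi>_def by (rule lap_sum[OF finV])
    also have "\<dots> = (\<Sum>y\<in>V. c y * ((if v = y then 1 else 0) - (if v = g then 1 else 0)))"
      by (rule sum.cong) (use pot[OF g] v P_def in auto)
    also have "\<dots> = (\<Sum>y\<in>V. (if v = y then c y else 0) - c y * (if v = g then 1 else 0))"
      by (rule sum.cong) auto
    also have "\<dots> = (\<Sum>y\<in>V. (if v = y then c y else 0)) - (\<Sum>y\<in>V. c y) * (if v = g then 1 else 0)"
      by (simp add: sum_subtractf sum_distrib_right)
    also have "\<dots> = c v" using v c finV by simp
    finally show ?thesis .
  qed
  have "\<forall>v\<in>V. L (\<lambda>z. \<phi> z - \<chi> z) v = 0" using \<phi> L\<chi> lap_diff by simp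
  hence K: "\<phi> z - \<chi> z = \<phi> g - \<chi> g" if "z \<in> V" for z using harmonic_const that g by blast
  have lhs: "(\<Sum>x\<in>V. c x * \<phi> x) = (\<Sum>x\<in>V. \<Sum>y\<in>V. c x * c y * P y x)"
  proof -
    have "(\<Sum>x\<in>V. c x * \<phi> x) = (\<Sum>x\<in>V. c x * \<chi> x + c x * (\<phi> g - \<chi> g))"
    proof (rule sum.cong[OF refl])
      fix x assume "x \<in> V"
      from K[OF this] have "\<phi> x = \<chi> x + (\<phi> g - \<chi> g)" by simp
      thus "c x * \<phi> x = c x * \<chi> x + c x * (\<phi> g - \<chi> g)" by (simp add: distrib_left)
    qed
    also have "\<dots> = (\<Sum>x\<in>V. c x * \<chi> x)" using c by (simp add: sum.distrib sum_distrib_right[symmetric])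
    also have "\<dots> = (\<Sum>x\<in>V. \<Sum>y\<in>V. c x * c y * P y x)"
      unfolding \<chi>_def by (simp add: sum_distrib_left mult.assoc)
    finally show ?thesis .
  qed
  have "(\<Sum>x\<in>V. \<Sum>y\<in>V. c x * c y * \<Omega> x y)
     = (\<Sum>x\<in>V. \<Sum>y\<in>V. c x * c y * P x x - c x * c y * P y x - c x * c y * P x y + c x * c y * P y y)"
    by (intro sum.cong refl) (simp add: res_pot[OF g] P_def algebra_simps)
  also have "\<dots> = (\<Sum>x\<in>V. \<Sum>y\<in>V. c x * c y * P x x) - (\<Sum>x\<in>V. \<Sum>y\<in>V. c x * c y * P y x)
      - (\<Sum>x\<in>V. \<Sum>y\<in>V. c x * c y * P x y) + (\<Sum>x\<in>V. \<Sum>y\<in>V. c x * c y * P y y)"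
    by (simp add: sum.distrib sum_subtractf)
  also have "(\<Sum>x\<in>V. \<Sum>y\<in>V. c x * c y * P x x) = 0"
  proof -
    have "\<And>x. (\<Sum>y\<in>V. c x * c y * P x x) = c x * P x x * (\<Sum>y\<in>V. c y)"
    proof -
      fix x
      have "(\<Sum>y\<in>V. c x * c y * P x x) = (\<Sum>y\<in>V. (c x * P x x) * c y)" by (rule sum.cong) (simp_all add: algebra_simps)
      also have "\<dots> = c x * P x x * (\<Sum>y\<in>V. c y)" by (rule sum_distrib_left[symmetric])
      finally show "(\<Sum>y\<in>V. c x * c y * P x x) = c x * P x x * (\<Sum>y\<in>V. c y)" .
    qed
    thus ?thesis using c by simp
  qed
  also have "(\<Sum>x\<in>V. \<Sum>y\<in>V. c x * c y * P y y) = 0"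
  proof -
    have eq: "\<And>y. (\<Sum>x\<in>V. c x * c y * P y y) = c y * P y y * (\<Sum>x\<in>V. c x)"
    proof -
      fix y
      have "(\<Sum>x\<in>V. c x * c y * P y y) = (\<Sum>x\<in>V. (c y * P y y) * c x)" by (rule sum.cong) (simp_all add: algebra_simps)
      also have "\<dots> = c y * P y y * (\<Sum>x\<in>V. c x)" by (rule sum_distrib_left[symmetric])
      finally show "(\<Sum>x\<in>V. c x * c y * P y y) = c y * P y y * (\<Sum>x\<in>V. c x)" .
    qed
    have "(\<Sum>x\<in>V. \<Sum>y\<in>V. c x * c y * P y y) = (\<Sum>y\<in>V. \<Sum>x\<in>V. c x * c y * P y y)" by (rule sum.swap)
    thus ?thesis using c eq by simp
  qed
  also have "(\<Sum>x\<in>V. \<Sum>y\<in>V. c x * c y * P x y) = (\<Sum>x\<in>V. \<Sum>y\<in>V. c x * c y * P y x)"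
  proof -
    have "(\<Sum>x\<in>V. \<Sum>y\<in>V. c x * c y * P x y) = (\<Sum>y\<in>V. \<Sum>x\<in>V. c x * c y * P x y)" by (rule sum.swap)
    also have "\<dots> = (\<Sum>x\<in>V. \<Sum>y\<in>V. c x * c y * P y x)" by (intro sum.cong refl) (simp only: mult.commute)
    finally show ?thesis .
  qed
  finally have "(\<Sum>x\<in>V. \<Sum>y\<in>V. c x * c y * \<Omega> x y) = 0 - (\<Sum>x\<in>V. \<Sum>y\<in>V. c x * c y * P y x) - (\<Sum>x\<in>V. \<Sum>y\<in>V. c x * c y * P y x) + 0" .
  thus ?thesis using lhs by linarith
qed

lemma foster_N: "(\<Sum>v\<in>V. \<Sum>u\<in>N v. \<Omega> v u) = 2 * (real (card V) - 1)"
proof (cases "V = {}")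
  case True
  have "V \<noteq> {}" using conn unfolding connected_graph_def by simp
  then show ?thesis using True by simp
next
  case False
  then obtain g where g: "g \<in> V" by blast
  define P where "P = pot g"
  have one: "(\<Sum>v\<in>V. \<Sum>u\<in>N v. P v v - P v u) = real (card V) - 1"
  proof -
    have "(\<Sum>v\<in>V. \<Sum>u\<in>N v. P v v - P v u) = (\<Sum>v\<in>V. L (P v) v)" unfolding lap_def ..
    also have "\<dots> = (\<Sum>v\<in>V. 1 - (if v = g then 1 else 0))"
      by (rule sum.cong) (use pot[OF g] P_def in auto)
    also have "\<dots> = real (card V) - 1" using g finV by (simp add: sum_subtractf)
    finally show ?thesis .
  qed
  have "(\<Sum>v\<in>V. \<Sum>u\<in>N v. \<Omega> v u) = (\<Sum>v\<in>V. \<Sum>u\<in>N v. (P v v - P v u) + (P u u - P u v))"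
  proof (intro sum.cong refl)
    fix v u assume v: "v \<in> V" and u: "u \<in> N v"
    hence "u \<in> V" using N_sub by blast
    thus "\<Omega> v u = (P v v - P v u) + (P u u - P u v)" using v by (simp add: res_pot[OF g] P_def)
  qed
  also have "\<dots> = (\<Sum>v\<in>V. \<Sum>u\<in>N v. P v v - P v u) + (\<Sum>v\<in>V. \<Sum>u\<in>N v. P u u - P u v)"
    by (simp add: sum.distrib)
  also have "(\<Sum>v\<in>V. \<Sum>u\<in>N v. P u u - P u v) = (\<Sum>v\<in>V. \<Sum>u\<in>N v. P v v - P v u)"
    by (rule nsum_swap)
  finally show ?thesis using one by simp
qed

lemma esum_swap: "(\<Sum>e\<in>E. \<Sum>x\<in>e. g x e) = (\<Sum>x\<in>V. \<Sum>e\<in>{e\<in>E. x \<in> e}. g x e)"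
proof -
  have "(\<Sum>e\<in>E. \<Sum>x\<in>e. g x e) = (\<Sum>e\<in>E. \<Sum>x\<in>{x\<in>V. x \<in> e}. g x e)"
  proof (rule sum.cong[OF refl])
    fix e assume "e \<in> E"
    hence "{x\<in>V. x \<in> e} = e" using edge by blast
    thus "(\<Sum>x\<in>e. g x e) = (\<Sum>x\<in>{x\<in>V. x \<in> e}. g x e)" by simp
  qed
  also have "\<dots> = (\<Sum>x\<in>V. \<Sum>e\<in>{e\<in>E. x \<in> e}. g x e)"
    by (rule sum.swap_restrict[OF finE finV, where g = "\<lambda>e x. g x e" and R = "\<lambda>e x. x \<in> e"])
  finally show ?thesis .
qed

lemma bij_N: assumes x: "x \<in> V" shows "bij_betw (\<lambda>u. {x, u}) (N x) {e\<in>E. x \<in> e}"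
proof (rule bij_betw_imageI)
  show "inj_on (\<lambda>u. {x, u}) (N x)"
  proof (rule inj_onI)
    fix u w assume "u \<in> N x" "w \<in> N x" "{x, u} = {x, w}"
    thus "u = w" by (metis doubleton_eq_iff)
  qed
  show "(\<lambda>u. {x, u}) ` N x = {e\<in>E. x \<in> e}"
  proof
    show "(\<lambda>u. {x, u}) ` N x \<subseteq> {e\<in>E. x \<in> e}" unfolding nbrs_def adj_def by auto
    show "{e\<in>E. x \<in> e} \<subseteq> (\<lambda>u. {x, u}) ` N x"
    proof
      fix e assume e: "e \<in> {e\<in>E. x \<in> e}"
      hence "card e = 2" using edge by blast
      then obtain a b where ab: "e = {a, b}" "a \<noteq> b" unfolding card_2_iff by blast
      define u where "u = (if a = x then b else a)"
      have ex: "e = {x, u}" using ab e u_def by auto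
      have "u \<noteq> x" using ab e u_def by auto
      moreover have "u \<in> V" using edge[of e] e ex by auto
      ultimately have "u \<in> N x" using e ex unfolding nbrs_def adj_def by auto
      thus "e \<in> (\<lambda>u. {x, u}) ` N x" using ex by blast
    qed
  qed
qed

lemma deg_N: "x \<in> V \<Longrightarrow> Defs.degree E x = card (N x)"
  unfolding Defs.degree_def using bij_betw_same_card[OF bij_N] by simp

lemma esum_N: "x \<in> V \<Longrightarrow> (\<Sum>e\<in>{e\<in>E. x \<in> e}. h e) = (\<Sum>u\<in>N x. h {x, u})"
  using sum.reindex_bij_betw[OF bij_N, of x h] by simp

lemma esum2: "(\<Sum>e\<in>E. \<Sum>x\<in>e. \<Sum>y\<in>e. f x y) = (\<Sum>x\<in>V. \<Sum>u\<in>N x. f x x + f x u)"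
proof -
  have "(\<Sum>e\<in>E. \<Sum>x\<in>e. \<Sum>y\<in>e. f x y) = (\<Sum>x\<in>V. \<Sum>e\<in>{e\<in>E. x \<in> e}. \<Sum>y\<in>e. f x y)"
    by (rule esum_swap)
  also have "\<dots> = (\<Sum>x\<in>V. \<Sum>u\<in>N x. \<Sum>y\<in>{x, u}. f x y)"
    by (rule sum.cong[OF refl]) (rule esum_N)
  also have "\<dots> = (\<Sum>x\<in>V. \<Sum>u\<in>N x. f x x + f x u)"
    by (intro sum.cong refl) (auto simp: nbrs_def adj_def)
  finally show ?thesis .
qed

lemma foster: "(\<Sum>e\<in>E. \<Sum>x\<in>e. \<Sum>y\<in>e. \<Omega> x y) = 2 * (real (card V) - 1)"
proof -
  have "(\<Sum>e\<in>E. \<Sum>x\<in>e. \<Sum>y\<in>e. \<Omega> x y) = (\<Sum>x\<in>V. \<Sum>u\<in>N x. \<Omega> x x + \<Omega> x u)" by (rule esum2)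
  also have "\<dots> = (\<Sum>x\<in>V. \<Sum>u\<in>N x. \<Omega> x u)" by (intro sum.cong refl) (simp add: res_self)
  finally show ?thesis using foster_N by simp
qed

end

definition mu :: "'a sv set \<Rightarrow> 'a sv" where "mu e = Mid (Abs_fset e)"
definition endp :: "'a sv \<Rightarrow> 'a sv set" where "endp r = (case r of Mid A \<Rightarrow> fset A | Old _ \<Rightarrow> {})"

lemma endp_mu: "finite e \<Longrightarrow> endp (mu e) = e"
  unfolding endp_def mu_def by (simp add: Abs_fset_inverse)

lemma mu_inj: "finite e \<Longrightarrow> finite f \<Longrightarrow> mu e = mu f \<Longrightarrow> e = f"
  using endp_mu by metis

locale sd = cg V E for V :: "'a sv set" and E +
  assumes fresh: "\<forall>e\<in>E. mu e \<notin> V"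
begin

definition V' where "V' = V \<union> mu ` E"
definition E' where "E' = {{u, mu e} | u e. e \<in> E \<and> u \<in> e}"

lemma subdiv_eq: "subdiv (V, E) = (V', E')"
  unfolding subdiv_def V'_def E'_def mu_def by simp

lemma mu_notV: "e \<in> E \<Longrightarrow> mu e \<notin> V" using fresh by blast
lemma inj_mu: "inj_on mu E" by (rule inj_onI) (use fine mu_inj in blast)
lemma finV': "finite V'" unfolding V'_def using finV finE by simp
lemma disj: "V \<inter> mu ` E = {}" using mu_notV by blast

lemma sumV': "(\<Sum>r\<in>V'. f r) = (\<Sum>v\<in>V. f v) + (\<Sum>e\<in>E. f (mu e))"
proof -
  have "(\<Sum>r\<in>V'. f r) = (\<Sum>v\<in>V. f v) + (\<Sum>r\<in>mu ` E. f r)"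
    unfolding V'_def by (rule sum.union_disjoint[OF finV _ disj]) (use finE in simp)
  also have "(\<Sum>r\<in>mu ` E. f r) = (\<Sum>e\<in>E. f (mu e))" by (rule sum.reindex[OF inj_mu, unfolded comp_def])
  finally show ?thesis .
qed

lemma cardV': "card V' = card V + card E"
  unfolding V'_def using card_Un_disjoint[OF finV _ disj] finE card_image[OF inj_mu] by simp

lemma E'_mem: "x \<in> E' \<longleftrightarrow> (\<exists>u e. e \<in> E \<and> u \<in> e \<and> x = {u, mu e})"
  unfolding E'_def by blast

lemma ne_mu: "u \<in> V \<Longrightarrow> e \<in> E \<Longrightarrow> u \<noteq> mu e" using mu_notV by blast

lemma cardE': "card E' = 2 * card E"
proof -
  have eq: "E' = (\<lambda>(e, u). {u, mu e}) ` (SIGMA e:E. e)" unfolding E'_def by auto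
  have inj: "inj_on (\<lambda>(e, u). {u, mu e}) (SIGMA e:E. e)"
  proof (rule inj_onI)
    fix x y assume xin: "x \<in> (SIGMA e:E. e)" and yin: "y \<in> (SIGMA e:E. e)"
      and xy: "(\<lambda>(e, u). {u, mu e}) x = (\<lambda>(e, u). {u, mu e}) y"
    obtain e u where x: "x = (e, u)" "e \<in> E" "u \<in> e" using xin by auto
    obtain f w where y: "y = (f, w)" "f \<in> E" "w \<in> f" using yin by auto
    have a6: "{u, mu e} = {w, mu f}" using xy x y by simp
    have uV: "u \<in> V" using edge x by blast
    have "u \<noteq> mu f" using ne_mu[OF uV y(2)] .
    hence "u = w \<and> mu e = mu f" using a6 by (metis doubleton_eq_iff)
    hence "e = f \<and> u = w" using mu_inj fine x(2) y(2) by blast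
    thus "x = y" using x y by simp
  qed
  have "card E' = card (SIGMA e:E. e)" unfolding eq by (rule card_image[OF inj])
  also have "\<dots> = (\<Sum>e\<in>E. card e)" by (rule card_SigmaI) (use finE fine in auto)
  also have "\<dots> = (\<Sum>e\<in>E. 2)" by (rule sum.cong) (use edge in auto)
  finally show ?thesis by simp
qed

lemma adj'_old: "v \<in> V \<Longrightarrow> e \<in> E \<Longrightarrow> v \<in> e \<Longrightarrow> adj E' v (mu e)"
  unfolding adj_def E'_def using ne_mu by blast

lemma adj'_mid: "v \<in> V \<Longrightarrow> e \<in> E \<Longrightarrow> v \<in> e \<Longrightarrow> adj E' (mu e) v"
  using adj'_old adj_sym by metis

lemma graph': "graph V' E'"
proof -
  have "\<forall>x\<in>E'. x \<subseteq> V' \<and> card x = 2"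
  proof
    fix x assume "x \<in> E'"
    then obtain u e where ue: "e \<in> E" "u \<in> e" "x = {u, mu e}" unfolding E'_mem by blast
    have uV: "u \<in> V" using edge ue by blast
    show "x \<subseteq> V' \<and> card x = 2" using ue uV ne_mu[OF uV ue(1)] unfolding V'_def by auto
  qed
  thus ?thesis unfolding graph_def using finV' by blast
qed

lemma connected': "connected_graph V' E'"
proof -
  have reachV: "(adj E')\<^sup>*\<^sup>* u v" if "(adj E)\<^sup>*\<^sup>* u v" for u v
    using that
  proof (induction rule: rtranclp_induct)
    case base then show ?case by simp
  next
    case (step y z)
    have yz: "{y, z} \<in> E" "y \<in> V" "z \<in> V" using step(2) adjV unfolding adj_def by auto
    have "adj E' y (mu {y, z})" using adj'_old[OF yz(2) yz(1)] by simp
    moreover have "adj E' (mu {y, z}) z" using adj'_mid[OF yz(3) yz(1)] by simp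
    ultimately show ?case using step(3) by (meson rtranclp.rtrancl_into_rtrancl)
  qed
  have cc: "\<forall>a\<in>V. \<forall>b\<in>V. (adj E)\<^sup>*\<^sup>* a b" using conn unfolding connected_graph_def by simp
  have toV: "\<exists>u\<in>V. (adj E')\<^sup>*\<^sup>* p u \<and> (adj E')\<^sup>*\<^sup>* u p" if pV: "p \<in> V'" for p
  proof (cases "p \<in> V")
    case True then show ?thesis by blast
  next
    case False
    then obtain e where e: "e \<in> E" "p = mu e" using pV unfolding V'_def by blast
    have "card e = 2" using edge e by blast
    then obtain a b where "e = {a, b}" unfolding card_2_iff by blast
    hence aE: "a \<in> e" by simp
    have aV: "a \<in> V" using edge e aE by blast
    show ?thesis using adj'_old[OF aV e(1) aE] adj'_mid[OF aV e(1) aE] e(2) aV by blast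
  qed
  have "V \<noteq> {}" using conn unfolding connected_graph_def by simp
  hence "V' \<noteq> {}" unfolding V'_def by simp
  moreover have "\<forall>p\<in>V'. \<forall>q\<in>V'. (adj E')\<^sup>*\<^sup>* p q"
  proof (intro ballI)
    fix p q assume p: "p \<in> V'" and q: "q \<in> V'"
    obtain u where u: "u \<in> V" "(adj E')\<^sup>*\<^sup>* p u" using toV[OF p] by blast
    obtain w where w: "w \<in> V" "(adj E')\<^sup>*\<^sup>* w q" using toV[OF q] by blast
    have "(adj E')\<^sup>*\<^sup>* u w" using reachV cc u(1) w(1) by blast
    thus "(adj E')\<^sup>*\<^sup>* p q" using u(2) w(2) by (meson rtranclp_trans)
  qed
  ultimately show ?thesis unfolding connected_graph_def using graph' by blast
qed

sublocale S: cg V' E' by (unfold_locales) (rule connected')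

lemma NS_old: assumes v: "v \<in> V" shows "nbrs V' E' v = mu ` {e\<in>E. v \<in> e}"
proof (rule equalityI; rule subsetI)
  fix q assume q: "q \<in> nbrs V' E' v"
  then have "{v, q} \<in> E'" "v \<noteq> q" by (simp_all add: nbrs_def adj_def)
  then obtain u e where ue: "e \<in> E" "u \<in> e" "{v, q} = {u, mu e}" unfolding E'_mem by blast
  have "v \<noteq> mu e" using ne_mu[OF v ue(1)] .
  hence "v = u \<and> q = mu e" using ue(3) by (metis doubleton_eq_iff)
  thus "q \<in> mu ` {e\<in>E. v \<in> e}" using ue by blast
next
  fix q assume q: "q \<in> mu ` {e\<in>E. v \<in> e}"
  then obtain e where e: "e \<in> E" "v \<in> e" "q = mu e" by blast
  show "q \<in> nbrs V' E' v" unfolding nbrs_def using adj'_old[OF v e(1,2)] e unfolding V'_def by blast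
qed

lemma NS_mid: assumes f: "f \<in> E" shows "nbrs V' E' (mu f) = f"
proof (rule equalityI; rule subsetI)
  fix q assume q: "q \<in> nbrs V' E' (mu f)"
  then have "{mu f, q} \<in> E'" by (simp add: nbrs_def adj_def)
  then obtain u e where ue: "e \<in> E" "u \<in> e" "{mu f, q} = {u, mu e}" unfolding E'_mem by blast
  have uV: "u \<in> V" using edge ue by blast
  have "u \<noteq> mu f" using ne_mu[OF uV f] .
  hence "mu f = mu e \<and> q = u" using ue(3) by (metis doubleton_eq_iff)
  hence "f = e" "q = u" using mu_inj[OF fine[OF f] fine[OF ue(1)]] by simp_all
  thus "q \<in> f" using ue by simp
next
  fix q assume q: "q \<in> f"
  have qV: "q \<in> V" using edge f q by blast
  show "q \<in> nbrs V' E' (mu f)" unfolding nbrs_def using adj'_mid[OF qV f q] qV unfolding V'_def by blast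
qed

lemma degS_old: "v \<in> V \<Longrightarrow> Defs.degree E' v = Defs.degree E v"
proof -
  assume v: "v \<in> V"
  have "Defs.degree E' v = card (nbrs V' E' v)" using S.deg_N v unfolding V'_def by simp
  also have "\<dots> = card {e\<in>E. v \<in> e}" unfolding NS_old[OF v]
    by (rule card_image, rule inj_on_subset[OF inj_mu]) auto
  finally show ?thesis unfolding Defs.degree_def .
qed

lemma degS_mid: "e \<in> E \<Longrightarrow> Defs.degree E' (mu e) = 2"
proof -
  assume e: "e \<in> E"
  have "Defs.degree E' (mu e) = card (nbrs V' E' (mu e))" using S.deg_N e unfolding V'_def by simp
  thus ?thesis using NS_mid[OF e] edge[OF e] by simp
qed

lemma handshake: "(\<Sum>v\<in>V. real (Defs.degree E v)) = 2 * real (card E)"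
proof -
  have "(\<Sum>e\<in>E. \<Sum>x\<in>e. (1::real)) = (\<Sum>x\<in>V. \<Sum>e\<in>{e\<in>E. x \<in> e}. 1)" by (rule esum_swap)
  moreover have "(\<Sum>e\<in>E. \<Sum>x\<in>e. (1::real)) = (\<Sum>e\<in>E. 2)" by (rule sum.cong) (use edge in auto)
  ultimately show ?thesis unfolding Defs.degree_def by simp
qed

end

context sd
begin

abbreviation "\<Omega>S \<equiv> resistance V' E'"

definition dl :: "'a sv \<Rightarrow> 'a sv \<Rightarrow> real" where "dl p r = (if r = p then 1 else 0)"
definition src :: "'a sv \<Rightarrow> 'a sv \<Rightarrow> real" where
  "src p x = (if p \<in> V then dl p x else (if x \<in> endp p then 1/2 else 0))"
definition Bf :: "('a sv \<Rightarrow> real) \<Rightarrow> ('a sv \<Rightarrow> real) \<Rightarrow> real" where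
  "Bf f g = (\<Sum>x\<in>V. \<Sum>y\<in>V. f x * g y * \<Omega> x y)"
definition hh :: "'a sv \<Rightarrow> real" where
  "hh p = (if p \<in> V then 0 else 1/2) - Bf (src p) (src p)"

lemma Bf_sym: "Bf f g = Bf g f"
proof -
  have "Bf f g = (\<Sum>y\<in>V. \<Sum>x\<in>V. f x * g y * \<Omega> x y)" unfolding Bf_def by (rule sum.swap)
  also have "\<dots> = Bf g f" unfolding Bf_def
    by (intro sum.cong refl) (simp add: res_sym mult.commute)
  finally show ?thesis .
qed

lemma Bf_diff: "Bf (\<lambda>x. f x - g x) (\<lambda>x. f x - g x) = Bf f f - Bf f g - Bf g f + Bf g g"
  unfolding Bf_def by (simp add: algebra_simps sum_subtractf sum.distrib)

lemma lapS:
  assumes \<phi>: "\<forall>v\<in>V. L \<phi> v = \<beta> v + (1/2) * (\<Sum>e\<in>{e\<in>E. v \<in> e}. \<beta> (mu e))"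
  shows "\<forall>p\<in>V'. lap V' E' (\<lambda>r. if r \<in> V then 2 * \<phi> r else (\<Sum>u\<in>endp r. \<phi> u) + \<beta> r / 2) p = \<beta> p"
proof
  define \<psi> where "\<psi> = (\<lambda>r. if r \<in> V then 2 * \<phi> r else (\<Sum>u\<in>endp r. \<phi> u) + \<beta> r / 2)"
  fix p assume p: "p \<in> V'"
  have "lap V' E' \<psi> p = \<beta> p"
  proof (cases "p \<in> V")
    case True
    have "lap V' E' \<psi> p = (\<Sum>q\<in>mu ` {e\<in>E. p \<in> e}. \<psi> p - \<psi> q)" unfolding lap_def NS_old[OF True] ..
    also have "\<dots> = (\<Sum>e\<in>{e\<in>E. p \<in> e}. \<psi> p - \<psi> (mu e))"
      by (rule sum.reindex[OF inj_on_subset[OF inj_mu], unfolded comp_def]) auto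
    also have "\<dots> = (\<Sum>e\<in>{e\<in>E. p \<in> e}. 2 * \<phi> p - ((\<Sum>u\<in>e. \<phi> u) + \<beta> (mu e) / 2))"
      by (rule sum.cong) (auto simp: \<psi>_def True mu_notV endp_mu fine)
    also have "\<dots> = (\<Sum>u\<in>N p. 2 * \<phi> p - ((\<Sum>w\<in>{p, u}. \<phi> w) + \<beta> (mu {p, u}) / 2))"
      by (rule esum_N[OF True])
    also have "\<dots> = (\<Sum>u\<in>N p. (\<phi> p - \<phi> u) - \<beta> (mu {p, u}) / 2)"
      by (rule sum.cong) (auto simp: nbrs_def adj_def)
    also have "\<dots> = L \<phi> p - (1/2) * (\<Sum>u\<in>N p. \<beta> (mu {p, u}))"
      unfolding lap_def by (simp add: sum_subtractf sum_divide_distrib)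
    also have "(\<Sum>u\<in>N p. \<beta> (mu {p, u})) = (\<Sum>e\<in>{e\<in>E. p \<in> e}. \<beta> (mu e))"
      by (rule esum_N[OF True, symmetric])
    finally show ?thesis using \<phi> True by simp
  next
    case False
    then obtain f where f: "f \<in> E" "p = mu f" using p unfolding V'_def by blast
    have fV: "\<And>u. u \<in> f \<Longrightarrow> u \<in> V" using edge f by blast
    have "lap V' E' \<psi> p = (\<Sum>u\<in>f. \<psi> p - \<psi> u)" unfolding lap_def f(2) NS_mid[OF f(1)] ..
    also have "\<dots> = (\<Sum>u\<in>f. ((\<Sum>w\<in>f. \<phi> w) + \<beta> p / 2) - 2 * \<phi> u)"
      by (rule sum.cong) (use False f fV in \<open>auto simp: \<psi>_def endp_mu fine\<close>)
    also have "\<dots> = real (card f) * ((\<Sum>w\<in>f. \<phi> w) + \<beta> p / 2) - 2 * (\<Sum>u\<in>f. \<phi> u)"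
      by (simp add: sum_subtractf sum_distrib_left)
    also have "\<dots> = \<beta> p" using edge f by simp
    finally show ?thesis .
  qed
  thus "lap V' E' (\<lambda>r. if r \<in> V then 2 * \<phi> r else (\<Sum>u\<in>endp r. \<phi> u) + \<beta> r / 2) p = \<beta> p"
    unfolding \<psi>_def .
qed

lemma bsum: fixes \<beta> :: "'a sv \<Rightarrow> real" shows "(\<Sum>v\<in>V. \<beta> v + (1/2) * (\<Sum>e\<in>{e\<in>E. v \<in> e}. \<beta> (mu e))) = (\<Sum>r\<in>V'. \<beta> r)"
proof -
  have "(\<Sum>v\<in>V. \<Sum>e\<in>{e\<in>E. v \<in> e}. \<beta> (mu e)) = (\<Sum>e\<in>E. \<Sum>v\<in>e. \<beta> (mu e))"
    by (rule esum_swap[symmetric])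
  also have "\<dots> = (\<Sum>e\<in>E. 2 * \<beta> (mu e))" by (rule sum.cong) (use edge in auto)
  finally have "(\<Sum>v\<in>V. \<Sum>e\<in>{e\<in>E. v \<in> e}. \<beta> (mu e)) = 2 * (\<Sum>e\<in>E. \<beta> (mu e))"
    by (simp add: sum_distrib_left)
  thus ?thesis unfolding sumV' by (simp add: sum.distrib sum_divide_distrib[symmetric])
qed

lemma dlsum: assumes p: "p \<in> V'"
  shows "(\<Sum>e\<in>E. dl p (mu e) * F (mu e)) = (if p \<in> V then 0 else F p)"
proof -
  have "(\<Sum>e\<in>E. dl p (mu e) * F (mu e)) = (\<Sum>r\<in>mu ` E. dl p r * F r)"
    by (rule sum.reindex[OF inj_mu, unfolded comp_def, symmetric])
  also have "\<dots> = (\<Sum>r\<in>mu ` E. if p = r then F r else 0)"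
    by (rule sum.cong) (auto simp: dl_def)
  also have "\<dots> = (if p \<in> mu ` E then F p else 0)" using finE by (simp add: sum.delta)
  also have "\<dots> = (if p \<in> V then 0 else F p)" using p disj unfolding V'_def by auto
  finally show ?thesis .
qed

lemma src_b: assumes p: "p \<in> V'" and v: "v \<in> V"
  shows "dl p v + (1/2) * (\<Sum>e\<in>{e\<in>E. v \<in> e}. dl p (mu e)) = src p v"
proof -
  have "(\<Sum>e\<in>{e\<in>E. v \<in> e}. dl p (mu e)) = (\<Sum>e\<in>E. dl p (mu e) * (if v \<in> endp (mu e) then 1 else 0))"
  proof -
    have "(\<Sum>e\<in>{e\<in>E. v \<in> e}. dl p (mu e)) = (\<Sum>e\<in>E. if v \<in> e then dl p (mu e) else 0)"
      by (rule sum.inter_filter[OF finE])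
    also have "\<dots> = (\<Sum>e\<in>E. dl p (mu e) * (if v \<in> endp (mu e) then 1 else 0))"
      by (rule sum.cong) (auto simp: endp_mu fine)
    finally show ?thesis .
  qed
  also have "\<dots> = (if p \<in> V then 0 else (if v \<in> endp p then 1 else 0))" by (rule dlsum[OF p])
  finally have s: "(\<Sum>e\<in>{e\<in>E. v \<in> e}. dl p (mu e)) = (if p \<in> V then 0 else (if v \<in> endp p then 1 else 0))" .
  show ?thesis
  proof (cases "p \<in> V")
    case True then show ?thesis using s by (simp add: src_def)
  next
    case False
    hence "dl p v = 0" using v unfolding dl_def by auto
    then show ?thesis using s False by (simp add: src_def)
  qed
qed


lemma dl_sumV': "p \<in> V' \<Longrightarrow> (\<Sum>r\<in>V'. dl p r * F r) = F p"
proof -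
  assume p: "p \<in> V'"
  have "(\<Sum>r\<in>V'. dl p r * F r) = (\<Sum>r\<in>V'. if p = r then F r else 0)"
    by (rule sum.cong) (auto simp: dl_def)
  also have "\<dots> = F p" using p finV' by (simp add: sum.delta)
  finally show ?thesis .
qed

lemma resS:
  assumes p: "p \<in> V'" and q: "q \<in> V'"
  shows "\<Omega>S p q = 2 * Bf (src p) (src q) - (if p = q \<and> p \<notin> V then 1 else 0) + hh p + hh q"
proof -
  define \<beta> where "\<beta> r = dl p r - dl q r" for r
  define b where "b v = src p v - src q v" for v
  have bb: "b v = \<beta> v + (1/2) * (\<Sum>e\<in>{e\<in>E. v \<in> e}. \<beta> (mu e))" if v: "v \<in> V" for v
  proof -
    have "(\<Sum>e\<in>{e\<in>E. v \<in> e}. \<beta> (mu e)) = (\<Sum>e\<in>{e\<in>E. v \<in> e}. dl p (mu e)) - (\<Sum>e\<in>{e\<in>E. v \<in> e}. dl q (mu e))"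
      unfolding \<beta>_def by (simp add: sum_subtractf)
    thus ?thesis using src_b[OF p v] src_b[OF q v] unfolding b_def \<beta>_def by (simp add: algebra_simps)
  qed
  have sb: "(\<Sum>v\<in>V. b v) = 0"
  proof -
    have "(\<Sum>v\<in>V. b v) = (\<Sum>v\<in>V. \<beta> v + (1/2) * (\<Sum>e\<in>{e\<in>E. v \<in> e}. \<beta> (mu e)))"
      by (rule sum.cong) (auto simp: bb)
    also have "\<dots> = (\<Sum>r\<in>V'. \<beta> r)" by (rule bsum)
    also have "\<dots> = (\<Sum>r\<in>V'. dl p r * 1) - (\<Sum>r\<in>V'. dl q r * 1)" unfolding \<beta>_def by (simp add: sum_subtractf)
    also have "\<dots> = 0" using dl_sumV'[OF p, of "\<lambda>_. 1"] dl_sumV'[OF q, of "\<lambda>_. 1"] by simp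
    finally show ?thesis .
  qed
  obtain \<phi> where \<phi>: "\<forall>v\<in>V. L \<phi> v = b v" using exist[OF sb] by blast
  have \<phi>': "\<forall>v\<in>V. L \<phi> v = \<beta> v + (1/2) * (\<Sum>e\<in>{e\<in>E. v \<in> e}. \<beta> (mu e))" using \<phi> bb by simp
  define \<psi> where "\<psi> = (\<lambda>r. if r \<in> V then 2 * \<phi> r else (\<Sum>u\<in>endp r. \<phi> u) + \<beta> r / 2)"
  have L\<psi>: "\<forall>r\<in>V'. lap V' E' \<psi> r = (if r = p then 1 else 0) - (if r = q then 1 else 0)"
    using lapS[OF \<phi>'] unfolding \<psi>_def \<beta>_def dl_def by simp
  have "\<Omega>S p q = \<psi> p - \<psi> q" by (rule S.res_char[OF p q L\<psi>])
  also have "\<dots> = (\<Sum>r\<in>V'. \<beta> r * \<psi> r)"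
    unfolding \<beta>_def by (simp add: left_diff_distrib sum_subtractf dl_sumV'[OF p] dl_sumV'[OF q])
  also have "\<dots> = (\<Sum>v\<in>V. \<beta> v * \<psi> v) + (\<Sum>e\<in>E. \<beta> (mu e) * \<psi> (mu e))" by (rule sumV')
  also have "(\<Sum>v\<in>V. \<beta> v * \<psi> v) = (\<Sum>v\<in>V. 2 * (\<beta> v * \<phi> v))"
    by (rule sum.cong) (auto simp: \<psi>_def)
  also have "(\<Sum>e\<in>E. \<beta> (mu e) * \<psi> (mu e)) = (\<Sum>e\<in>E. (\<Sum>u\<in>e. \<beta> (mu e) * \<phi> u) + \<beta> (mu e) ^ 2 / 2)"
    by (rule sum.cong) (auto simp: \<psi>_def mu_notV endp_mu fine sum_distrib_left power2_eq_square distrib_left)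
  also have "\<dots> = (\<Sum>e\<in>E. \<Sum>u\<in>e. \<beta> (mu e) * \<phi> u) + (\<Sum>e\<in>E. \<beta> (mu e) ^ 2) / 2"
    by (simp add: sum.distrib sum_divide_distrib)
  also have "(\<Sum>e\<in>E. \<Sum>u\<in>e. \<beta> (mu e) * \<phi> u) = (\<Sum>u\<in>V. \<Sum>e\<in>{e\<in>E. u \<in> e}. \<beta> (mu e) * \<phi> u)"
    by (rule esum_swap)
  also have "\<dots> = (\<Sum>u\<in>V. (\<Sum>e\<in>{e\<in>E. u \<in> e}. \<beta> (mu e)) * \<phi> u)"
    by (simp add: sum_distrib_right)
  finally have "\<Omega>S p q = (\<Sum>v\<in>V. 2 * (\<beta> v * \<phi> v)) + (\<Sum>u\<in>V. (\<Sum>e\<in>{e\<in>E. u \<in> e}. \<beta> (mu e)) * \<phi> u) + (\<Sum>e\<in>E. \<beta> (mu e) ^ 2) / 2"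
    by simp
  also have "(\<Sum>v\<in>V. 2 * (\<beta> v * \<phi> v)) + (\<Sum>u\<in>V. (\<Sum>e\<in>{e\<in>E. u \<in> e}. \<beta> (mu e)) * \<phi> u) = 2 * (\<Sum>v\<in>V. b v * \<phi> v)"
  proof -
    have "(\<Sum>v\<in>V. 2 * (\<beta> v * \<phi> v)) + (\<Sum>u\<in>V. (\<Sum>e\<in>{e\<in>E. u \<in> e}. \<beta> (mu e)) * \<phi> u)
        = (\<Sum>v\<in>V. 2 * (\<beta> v * \<phi> v) + (\<Sum>e\<in>{e\<in>E. v \<in> e}. \<beta> (mu e)) * \<phi> v)" by (simp add: sum.distrib)
    also have "\<dots> = (\<Sum>v\<in>V. 2 * (b v * \<phi> v))" by (rule sum.cong) (auto simp: bb algebra_simps)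
    finally show ?thesis by (simp add: sum_distrib_left)
  qed
  also have "(\<Sum>v\<in>V. b v * \<phi> v) = - (1/2) * (\<Sum>x\<in>V. \<Sum>y\<in>V. b x * b y * \<Omega> x y)" by (rule QF[OF sb \<phi>])
  also have "(\<Sum>x\<in>V. \<Sum>y\<in>V. b x * b y * \<Omega> x y) = Bf (src p) (src p) - 2 * Bf (src p) (src q) + Bf (src q) (src q)"
    using Bf_diff[of "src p" "src q"] Bf_sym[of "src q" "src p"] unfolding b_def Bf_def by simp
  also have "(\<Sum>e\<in>E. \<beta> (mu e) ^ 2) = (if p \<in> V then 0 else 1) + (if q \<in> V then 0 else 1) - 2 * (if p = q \<and> p \<notin> V then 1 else 0)"
  proof -
    have "(\<Sum>e\<in>E. \<beta> (mu e) ^ 2) = (\<Sum>e\<in>E. dl p (mu e) * 1) + (\<Sum>e\<in>E. dl q (mu e) * 1) - 2 * (\<Sum>e\<in>E. dl p (mu e) * dl q (mu e))"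
    proof -
      have "(\<Sum>e\<in>E. \<beta> (mu e) ^ 2) = (\<Sum>e\<in>E. dl p (mu e) * 1 + dl q (mu e) * 1 - 2 * (dl p (mu e) * dl q (mu e)))"
        by (rule sum.cong) (auto simp: \<beta>_def power2_eq_square dl_def)
      thus ?thesis by (simp add: sum.distrib sum_subtractf sum_distrib_left)
    qed
    also have "\<dots> = (if p \<in> V then 0 else 1) + (if q \<in> V then 0 else 1) - 2 * (if p \<in> V then 0 else dl q p)"
    proof -
      have a: "(\<Sum>e\<in>E. dl p (mu e) * 1) = (if p \<in> V then 0 else 1)" using dlsum[OF p, of "\<lambda>_. 1"] by simp
      have b: "(\<Sum>e\<in>E. dl q (mu e) * 1) = (if q \<in> V then 0 else 1)" using dlsum[OF q, of "\<lambda>_. 1"] by simp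
      have c: "(\<Sum>e\<in>E. dl p (mu e) * dl q (mu e)) = (if p \<in> V then 0 else dl q p)" by (rule dlsum[OF p])
      show ?thesis by (simp only: a b c)
    qed
    finally show ?thesis by (auto simp: dl_def)
  qed
  finally show ?thesis unfolding hh_def by (auto simp: algebra_simps)
qed

end

lemma swap4:
  "(\<Sum>p\<in>P. \<Sum>q\<in>Q. \<Sum>x\<in>X. \<Sum>y\<in>Y. f p q x y) = (\<Sum>x\<in>X. \<Sum>y\<in>Y. \<Sum>p\<in>P. \<Sum>q\<in>Q. f p q x y)"
proof -
  have i: "(\<Sum>q\<in>Q. \<Sum>x\<in>X. \<Sum>y\<in>Y. f p q x y) = (\<Sum>x\<in>X. \<Sum>y\<in>Y. \<Sum>q\<in>Q. f p q x y)" for p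
  proof -
    have "(\<Sum>q\<in>Q. \<Sum>x\<in>X. \<Sum>y\<in>Y. f p q x y) = (\<Sum>x\<in>X. \<Sum>q\<in>Q. \<Sum>y\<in>Y. f p q x y)" by (rule sum.swap)
    also have "\<dots> = (\<Sum>x\<in>X. \<Sum>y\<in>Y. \<Sum>q\<in>Q. f p q x y)" by (rule sum.cong[OF refl], rule sum.swap)
    finally show ?thesis .
  qed
  have "(\<Sum>p\<in>P. \<Sum>q\<in>Q. \<Sum>x\<in>X. \<Sum>y\<in>Y. f p q x y) = (\<Sum>p\<in>P. \<Sum>x\<in>X. \<Sum>y\<in>Y. \<Sum>q\<in>Q. f p q x y)"
    by (rule sum.cong[OF refl], rule i)
  also have "\<dots> = (\<Sum>x\<in>X. \<Sum>p\<in>P. \<Sum>y\<in>Y. \<Sum>q\<in>Q. f p q x y)" by (rule sum.swap)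
  also have "\<dots> = (\<Sum>x\<in>X. \<Sum>y\<in>Y. \<Sum>p\<in>P. \<Sum>q\<in>Q. f p q x y)" by (rule sum.cong[OF refl], rule sum.swap)
  finally show ?thesis .
qed

context sd
begin

definition Ssum :: "('a sv \<Rightarrow> real) \<Rightarrow> 'a sv \<Rightarrow> real" where
  "Ssum \<alpha> x = (\<Sum>p\<in>V'. \<alpha> p * src p x)"

lemma Bf_S: "Bf (Ssum \<alpha>) (Ssum \<gamma>) = (\<Sum>p\<in>V'. \<Sum>q\<in>V'. \<alpha> p * \<gamma> q * Bf (src p) (src q))"
proof -
  have "Bf (Ssum \<alpha>) (Ssum \<gamma>) = (\<Sum>x\<in>V. \<Sum>y\<in>V. \<Sum>p\<in>V'. \<Sum>q\<in>V'. \<alpha> p * \<gamma> q * (src p x * src q y * \<Omega> x y))"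
    unfolding Bf_def Ssum_def
  proof (intro sum.cong refl)
    fix x y
    have "(\<Sum>p\<in>V'. \<alpha> p * src p x) * (\<Sum>q\<in>V'. \<gamma> q * src q y) * \<Omega> x y
        = (\<Sum>p\<in>V'. \<Sum>q\<in>V'. (\<alpha> p * src p x) * (\<gamma> q * src q y)) * \<Omega> x y" by (simp only: sum_product)
    also have "\<dots> = (\<Sum>p\<in>V'. \<Sum>q\<in>V'. (\<alpha> p * src p x) * (\<gamma> q * src q y) * \<Omega> x y)" by (simp only: sum_distrib_right)
    also have "\<dots> = (\<Sum>p\<in>V'. \<Sum>q\<in>V'. \<alpha> p * \<gamma> q * (src p x * src q y * \<Omega> x y))" by (simp add: mult_ac)
    finally show "(\<Sum>p\<in>V'. \<alpha> p * src p x) * (\<Sum>q\<in>V'. \<gamma> q * src q y) * \<Omega> x y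
        = (\<Sum>p\<in>V'. \<Sum>q\<in>V'. \<alpha> p * \<gamma> q * (src p x * src q y * \<Omega> x y))" .
  qed
  also have "\<dots> = (\<Sum>p\<in>V'. \<Sum>q\<in>V'. \<Sum>x\<in>V. \<Sum>y\<in>V. \<alpha> p * \<gamma> q * (src p x * src q y * \<Omega> x y))"
    by (rule swap4[symmetric])
  also have "\<dots> = (\<Sum>p\<in>V'. \<Sum>q\<in>V'. \<alpha> p * \<gamma> q * Bf (src p) (src q))"
    unfolding Bf_def by (simp add: sum_distrib_left)
  finally show ?thesis .
qed

lemma Ktot:
  "(\<Sum>p\<in>V'. \<Sum>q\<in>V'. \<alpha> p * \<gamma> q * \<Omega>S p q)
   = 2 * Bf (Ssum \<alpha>) (Ssum \<gamma>) - (\<Sum>e\<in>E. \<alpha> (mu e) * \<gamma> (mu e))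
     + (\<Sum>p\<in>V'. \<alpha> p * hh p) * (\<Sum>q\<in>V'. \<gamma> q) + (\<Sum>p\<in>V'. \<alpha> p) * (\<Sum>q\<in>V'. \<gamma> q * hh q)"
proof -
  have "(\<Sum>p\<in>V'. \<Sum>q\<in>V'. \<alpha> p * \<gamma> q * \<Omega>S p q)
     = (\<Sum>p\<in>V'. \<Sum>q\<in>V'. 2 * (\<alpha> p * \<gamma> q * Bf (src p) (src q)) - \<alpha> p * \<gamma> q * (if p = q \<and> p \<notin> V then 1 else 0)
          + (\<alpha> p * hh p) * \<gamma> q + \<alpha> p * (\<gamma> q * hh q))"
    by (intro sum.cong refl) (simp add: resS algebra_simps)
  also have "\<dots> = 2 * (\<Sum>p\<in>V'. \<Sum>q\<in>V'. \<alpha> p * \<gamma> q * Bf (src p) (src q))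
       - (\<Sum>p\<in>V'. \<Sum>q\<in>V'. \<alpha> p * \<gamma> q * (if p = q \<and> p \<notin> V then 1 else 0))
       + (\<Sum>p\<in>V'. \<Sum>q\<in>V'. (\<alpha> p * hh p) * \<gamma> q) + (\<Sum>p\<in>V'. \<Sum>q\<in>V'. \<alpha> p * (\<gamma> q * hh q))"
    by (simp add: sum.distrib sum_subtractf sum_distrib_left)
  also have "(\<Sum>p\<in>V'. \<Sum>q\<in>V'. \<alpha> p * \<gamma> q * Bf (src p) (src q)) = Bf (Ssum \<alpha>) (Ssum \<gamma>)"
    by (rule Bf_S[symmetric])
  also have "(\<Sum>p\<in>V'. \<Sum>q\<in>V'. \<alpha> p * \<gamma> q * (if p = q \<and> p \<notin> V then 1 else 0)) = (\<Sum>e\<in>E. \<alpha> (mu e) * \<gamma> (mu e))"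
  proof -
    have "(\<Sum>p\<in>V'. \<Sum>q\<in>V'. \<alpha> p * \<gamma> q * (if p = q \<and> p \<notin> V then 1 else 0))
        = (\<Sum>p\<in>V'. if p \<notin> V then \<alpha> p * \<gamma> p else 0)"
    proof (rule sum.cong[OF refl])
      fix p assume p: "p \<in> V'"
      have "(\<Sum>q\<in>V'. \<alpha> p * \<gamma> q * (if p = q \<and> p \<notin> V then 1 else 0))
          = (\<Sum>q\<in>V'. if p = q then (if p \<notin> V then \<alpha> p * \<gamma> q else 0) else 0)"
        by (rule sum.cong) auto
      also have "\<dots> = (if p \<notin> V then \<alpha> p * \<gamma> p else 0)" using p finV' by (simp add: sum.delta)
      finally show "(\<Sum>q\<in>V'. \<alpha> p * \<gamma> q * (if p = q \<and> p \<notin> V then 1 else 0)) = (if p \<notin> V then \<alpha> p * \<gamma> p else 0)" .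
    qed
    also have "\<dots> = (\<Sum>e\<in>E. \<alpha> (mu e) * \<gamma> (mu e))" unfolding sumV' using mu_notV by simp
    finally show ?thesis .
  qed
  also have "(\<Sum>p\<in>V'. \<Sum>q\<in>V'. (\<alpha> p * hh p) * \<gamma> q) = (\<Sum>p\<in>V'. \<alpha> p * hh p) * (\<Sum>q\<in>V'. \<gamma> q)"
    by (rule sum_product[symmetric])
  also have "(\<Sum>p\<in>V'. \<Sum>q\<in>V'. \<alpha> p * (\<gamma> q * hh q)) = (\<Sum>p\<in>V'. \<alpha> p) * (\<Sum>q\<in>V'. \<gamma> q * hh q)"
    by (rule sum_product[symmetric])
  finally show ?thesis .
qed

lemma Ssum_eq: "x \<in> V \<Longrightarrow> Ssum \<alpha> x = \<alpha> x + (1/2) * (\<Sum>e\<in>{e\<in>E. x \<in> e}. \<alpha> (mu e))"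
proof -
  assume x: "x \<in> V"
  have "Ssum \<alpha> x = (\<Sum>v\<in>V. \<alpha> v * src v x) + (\<Sum>e\<in>E. \<alpha> (mu e) * src (mu e) x)"
    unfolding Ssum_def by (rule sumV')
  also have "(\<Sum>v\<in>V. \<alpha> v * src v x) = (\<Sum>v\<in>V. if x = v then \<alpha> v else 0)"
    by (rule sum.cong) (auto simp: src_def dl_def)
  also have "\<dots> = \<alpha> x" using x finV by (simp add: sum.delta)
  also have "(\<Sum>e\<in>E. \<alpha> (mu e) * src (mu e) x) = (\<Sum>e\<in>E. if x \<in> e then \<alpha> (mu e) / 2 else 0)"
    by (rule sum.cong) (auto simp: src_def mu_notV endp_mu fine)
  also have "\<dots> = (\<Sum>e\<in>{e\<in>E. x \<in> e}. \<alpha> (mu e) / 2)" by (rule sum.inter_filter[OF finE, symmetric])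
  finally show ?thesis by (simp add: sum_divide_distrib)
qed

lemma sum_ind: "finite A \<Longrightarrow> a \<in> A \<Longrightarrow> (\<Sum>x\<in>A. (if x = a then 1 else 0) * G x) = (G a :: real)"
proof -
  assume A: "finite A" and a: "a \<in> A"
  have "(\<Sum>x\<in>A. (if x = a then 1 else 0) * G x) = (\<Sum>x\<in>A. if x = a then G x else 0)"
    by (rule sum.cong) auto
  also have "\<dots> = G a" using A a by simp
  finally show ?thesis .
qed

lemma Bf_nest: "Bf f g = (\<Sum>x\<in>V. f x * (\<Sum>y\<in>V. g y * \<Omega> x y))"
  unfolding Bf_def by (simp add: sum_distrib_left mult_ac)

lemma hh_old: "v \<in> V \<Longrightarrow> hh v = 0"
proof -
  assume v: "v \<in> V"
  have sv: "src v = (\<lambda>x. if x = v then 1 else 0)" using v by (auto simp: src_def dl_def)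
  have "Bf (src v) (src v) = (\<Sum>y\<in>V. (if y = v then 1 else 0) * \<Omega> v y)"
    unfolding Bf_nest sv by (rule sum_ind[OF finV v])
  also have "\<dots> = \<Omega> v v" by (rule sum_ind[OF finV v])
  finally show ?thesis unfolding hh_def using v res_self by simp
qed

lemma hh_mid: "e \<in> E \<Longrightarrow> hh (mu e) = 1/2 - (1/4) * (\<Sum>x\<in>e. \<Sum>y\<in>e. \<Omega> x y)"
proof -
  assume e: "e \<in> E"
  have eV: "{x\<in>V. x \<in> e} = e" using edge e by blast
  have se: "src (mu e) = (\<lambda>x. if x \<in> e then 1/2 else 0)"
    using e by (auto simp: src_def mu_notV endp_mu fine)
  have "Bf (src (mu e)) (src (mu e)) = (\<Sum>x\<in>V. if x \<in> e then (\<Sum>y\<in>V. if y \<in> e then \<Omega> x y / 4 else 0) else 0)"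
    unfolding Bf_def se by (intro sum.cong refl) (auto intro!: sum.cong)
  also have "\<dots> = (\<Sum>x\<in>{x\<in>V. x \<in> e}. (\<Sum>y\<in>V. if y \<in> e then \<Omega> x y / 4 else 0))"
    by (rule sum.inter_filter[OF finV, symmetric])
  also have "\<dots> = (\<Sum>x\<in>{x\<in>V. x \<in> e}. \<Sum>y\<in>{y\<in>V. y \<in> e}. \<Omega> x y / 4)"
    by (rule sum.cong[OF refl]) (rule sum.inter_filter[OF finV, symmetric])
  also have "\<dots> = (1/4) * (\<Sum>x\<in>e. \<Sum>y\<in>e. \<Omega> x y)" unfolding eV by (simp add: sum_divide_distrib)
  finally show ?thesis unfolding hh_def using mu_notV[OF e] by simp
qed

lemma hsum: "(\<Sum>p\<in>V'. \<alpha> p * hh p) = (\<Sum>e\<in>E. \<alpha> (mu e) * (1/2 - (1/4) * (\<Sum>x\<in>e. \<Sum>y\<in>e. \<Omega> x y)))"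
  unfolding sumV' by (simp add: hh_old hh_mid)

end

context cg
begin

lemma diag_sum: "(\<Sum>i\<in>V. \<Sum>j\<in>V - {i}. w i j * \<Omega> i j) = (\<Sum>i\<in>V. \<Sum>j\<in>V. w i j * \<Omega> i j)"
proof (rule sum.cong[OF refl])
  fix i assume i: "i \<in> V"
  have "(\<Sum>j\<in>V. w i j * \<Omega> i j) = w i i * \<Omega> i i + (\<Sum>j\<in>V - {i}. w i j * \<Omega> i j)"
    by (rule sum.remove[OF finV i])
  thus "(\<Sum>j\<in>V - {i}. w i j * \<Omega> i j) = (\<Sum>j\<in>V. w i j * \<Omega> i j)" using res_self[OF i] by simp
qed

lemma kirch_eq: "kirchhoff V E = (\<Sum>i\<in>V. \<Sum>j\<in>V. 1 * \<Omega> i j) / 2"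
  unfolding kirchhoff_def using diag_sum[of "\<lambda>_ _. 1"] by simp

lemma add_eq: "add_deg_kirchhoff V E = (\<Sum>i\<in>V. \<Sum>j\<in>V. (real (Defs.degree E i) + real (Defs.degree E j)) * \<Omega> i j) / 2"
  unfolding add_deg_kirchhoff_def using diag_sum[of "\<lambda>i j. real (Defs.degree E i) + real (Defs.degree E j)"] by simp

lemma mult_eq: "mult_deg_kirchhoff V E = (\<Sum>i\<in>V. \<Sum>j\<in>V. (real (Defs.degree E i) * real (Defs.degree E j)) * \<Omega> i j) / 2"
  unfolding mult_deg_kirchhoff_def using diag_sum[of "\<lambda>i j. real (Defs.degree E i) * real (Defs.degree E j)"] by simp

end

context sd
begin

definition "D x = real (Defs.degree E x)"
definition "D' p = real (Defs.degree E' p)"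
definition "ones = (\<lambda>_::'a sv. 1::real)"
lemma ones_app[simp]: "ones x = 1" by (simp add: ones_def)

lemma Bf_cong: "(\<And>x. x \<in> V \<Longrightarrow> f x = f' x) \<Longrightarrow> (\<And>x. x \<in> V \<Longrightarrow> g x = g' x) \<Longrightarrow> Bf f g = Bf f' g'"
  unfolding Bf_def by (intro sum.cong refl) auto

lemma Bf_lin: "Bf (\<lambda>x. a + b * D x) (\<lambda>y. c + d * D y)
   = a * c * Bf ones ones + a * d * Bf ones D + b * c * Bf D ones + b * d * Bf D D"
proof -
  have "Bf (\<lambda>x. a + b * D x) (\<lambda>y. c + d * D y) = (\<Sum>x\<in>V. \<Sum>y\<in>V.
      a * c * (ones x * ones y * \<Omega> x y) + a * d * (ones x * D y * \<Omega> x y) + b * c * (D x * ones y * \<Omega> x y) + b * d * (D x * D y * \<Omega> x y))"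
    unfolding Bf_def ones_def by (intro sum.cong refl) (simp add: algebra_simps)
  also have "\<dots> = a * c * Bf ones ones + a * d * Bf ones D + b * c * Bf D ones + b * d * Bf D D"
    unfolding Bf_def by (simp add: sum.distrib sum_distrib_left)
  finally show ?thesis .
qed

lemma S_one: "x \<in> V \<Longrightarrow> Ssum ones x = 1 + (1/2) * D x"
  using Ssum_eq[of x ones] unfolding ones_def D_def Defs.degree_def by simp

lemma S_D: "x \<in> V \<Longrightarrow> Ssum D' x = 0 + 2 * D x"
proof -
  assume x: "x \<in> V"
  have "(\<Sum>e\<in>{e\<in>E. x \<in> e}. D' (mu e)) = (\<Sum>e\<in>{e\<in>E. x \<in> e}. 2)"
    by (rule sum.cong) (auto simp: D'_def degS_mid)
  also have "\<dots> = 2 * D x" unfolding D_def Defs.degree_def by simp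
  finally show ?thesis using Ssum_eq[of x D'] x by (simp add: D'_def D_def degS_old)
qed

lemma sum_one: "(\<Sum>p\<in>V'. ones p) = real (card V) + real (card E)"
  by (simp add: cardV')

lemma sum_D': "(\<Sum>p\<in>V'. D' p) = 4 * real (card E)"
proof -
  have "(\<Sum>p\<in>V'. D' p) = (\<Sum>v\<in>V. D v) + (\<Sum>e\<in>E. 2)"
    unfolding sumV' by (simp add: D'_def D_def degS_old degS_mid)
  thus ?thesis using handshake unfolding D_def by simp
qed

lemma F_sum: "(\<Sum>e\<in>E. \<Sum>x\<in>e. \<Sum>y\<in>e. \<Omega> x y) = 2 * (real (card V) - 1)" by (rule foster)

lemma hs_one: "(\<Sum>p\<in>V'. ones p * hh p) = real (card E) / 2 - (real (card V) - 1) / 2"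
proof -
  have "(\<Sum>p\<in>V'. ones p * hh p) = (\<Sum>e\<in>E. 1/2 - (1/4) * (\<Sum>x\<in>e. \<Sum>y\<in>e. \<Omega> x y))"
    using hsum[of ones] by simp
  also have "\<dots> = real (card E) / 2 - (1/4) * (\<Sum>e\<in>E. \<Sum>x\<in>e. \<Sum>y\<in>e. \<Omega> x y)"
    by (simp only: sum_subtractf sum_distrib_left[symmetric]) simp
  finally show ?thesis using F_sum by simp
qed

lemma hs_D': "(\<Sum>p\<in>V'. D' p * hh p) = real (card E) - (real (card V) - 1)"
proof -
  have "(\<Sum>p\<in>V'. D' p * hh p) = (\<Sum>e\<in>E. 2 * (1/2 - (1/4) * (\<Sum>x\<in>e. \<Sum>y\<in>e. \<Omega> x y)))"
    using hsum[of D'] by (simp add: D'_def degS_mid)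
  also have "\<dots> = (\<Sum>e\<in>E. 1 - (1/2) * (\<Sum>x\<in>e. \<Sum>y\<in>e. \<Omega> x y))"
    by (rule sum.cong) (simp_all add: algebra_simps)
  also have "\<dots> = real (card E) - (1/2) * (\<Sum>e\<in>E. \<Sum>x\<in>e. \<Sum>y\<in>e. \<Omega> x y)"
    by (simp only: sum_subtractf sum_distrib_left[symmetric]) simp
  finally show ?thesis using F_sum by (simp add: field_simps)
qed

lemma ee: "(\<Sum>e\<in>E. ones (mu e) * ones (mu e)) = real (card E)"
  "(\<Sum>e\<in>E. D' (mu e) * ones (mu e)) = 2 * real (card E)"
  "(\<Sum>e\<in>E. ones (mu e) * D' (mu e)) = 2 * real (card E)"
  "(\<Sum>e\<in>E. D' (mu e) * D' (mu e)) = 4 * real (card E)"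
  by (simp_all add: ones_def D'_def degS_mid)

lemma Bsym: "Bf ones D = Bf D ones" by (rule Bf_sym)

lemma kH: "kirchhoff V E = Bf ones ones / 2"
  unfolding kirch_eq Bf_def ones_def by simp
lemma aH: "add_deg_kirchhoff V E = Bf D ones"
proof -
  have "add_deg_kirchhoff V E = (Bf D ones + Bf ones D) / 2"
    unfolding add_eq Bf_def ones_def D_def by (simp add: sum.distrib distrib_right)
  thus ?thesis using Bsym by simp
qed
lemma mH: "mult_deg_kirchhoff V E = Bf D D / 2"
  unfolding mult_eq Bf_def D_def by (simp add: mult_ac)

lemma kS: "kirchhoff V' E' = (\<Sum>p\<in>V'. \<Sum>q\<in>V'. ones p * ones q * \<Omega>S p q) / 2"
  unfolding S.kirch_eq ones_def by simp
lemma aS: "add_deg_kirchhoff V' E' = ((\<Sum>p\<in>V'. \<Sum>q\<in>V'. D' p * ones q * \<Omega>S p q) + (\<Sum>p\<in>V'. \<Sum>q\<in>V'. ones p * D' q * \<Omega>S p q)) / 2"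
  unfolding S.add_eq ones_def D'_def by (simp add: sum.distrib distrib_right)
lemma mS: "mult_deg_kirchhoff V' E' = (\<Sum>p\<in>V'. \<Sum>q\<in>V'. D' p * D' q * \<Omega>S p q) / 2"
  unfolding S.mult_eq D'_def by simp

lemma BSS:
  "Bf (Ssum ones) (Ssum ones) = Bf ones ones + Bf D ones + Bf D D / 4"
  "Bf (Ssum D') (Ssum ones) = 2 * Bf D ones + Bf D D"
  "Bf (Ssum ones) (Ssum D') = 2 * Bf D ones + Bf D D"
  "Bf (Ssum D') (Ssum D') = 4 * Bf D D"
proof -
  have "Bf (Ssum ones) (Ssum ones) = Bf (\<lambda>x. 1 + (1/2) * D x) (\<lambda>y. 1 + (1/2) * D y)"
    by (rule Bf_cong) (simp_all add: S_one)
  thus "Bf (Ssum ones) (Ssum ones) = Bf ones ones + Bf D ones + Bf D D / 4" unfolding Bf_lin using Bsym by simp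
  have "Bf (Ssum D') (Ssum ones) = Bf (\<lambda>x. 0 + 2 * D x) (\<lambda>y. 1 + (1/2) * D y)"
    by (rule Bf_cong) (simp_all add: S_one S_D)
  thus "Bf (Ssum D') (Ssum ones) = 2 * Bf D ones + Bf D D" unfolding Bf_lin using Bsym by simp
  have "Bf (Ssum ones) (Ssum D') = Bf (\<lambda>x. 1 + (1/2) * D x) (\<lambda>y. 0 + 2 * D y)"
    by (rule Bf_cong) (simp_all add: S_one S_D)
  thus "Bf (Ssum ones) (Ssum D') = 2 * Bf D ones + Bf D D" unfolding Bf_lin using Bsym by simp
  have "Bf (Ssum D') (Ssum D') = Bf (\<lambda>x. 0 + 2 * D x) (\<lambda>y. 0 + 2 * D y)"
    by (rule Bf_cong) (simp_all add: S_D)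
  thus "Bf (Ssum D') (Ssum D') = 4 * Bf D D" unfolding Bf_lin by simp
qed

theorem step:
  defines "n \<equiv> real (card V)" and "m \<equiv> real (card E)"
  shows "kirchhoff V' E' = 2 * kirchhoff V E + add_deg_kirchhoff V E + mult_deg_kirchhoff V E / 2
           + (m * m - n * n + n) / 2"
    and "add_deg_kirchhoff V' E' = 4 * add_deg_kirchhoff V E + 4 * mult_deg_kirchhoff V E
           + (3 * m * m - 2 * m * n - n * n + m + n)"
    and "mult_deg_kirchhoff V' E' = 8 * mult_deg_kirchhoff V E + 2 * m * (2 * m - 2 * n + 1)"
proof -
  note K = Ktot sum_one sum_D' hs_one hs_D' ee BSS kH aH mH
  show "kirchhoff V' E' = 2 * kirchhoff V E + add_deg_kirchhoff V E + mult_deg_kirchhoff V E / 2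
           + (m * m - n * n + n) / 2"
    unfolding kS K n_def m_def by (simp add: field_simps)
  show "add_deg_kirchhoff V' E' = 4 * add_deg_kirchhoff V E + 4 * mult_deg_kirchhoff V E
           + (3 * m * m - 2 * m * n - n * n + m + n)"
    unfolding aS K n_def m_def by (simp add: field_simps)
  show "mult_deg_kirchhoff V' E' = 8 * mult_deg_kirchhoff V E + 2 * m * (2 * m - 2 * n + 1)"
    unfolding mS K n_def m_def by (simp add: field_simps)
qed

end

section \<open>Isomorphic copies\<close>

locale iso = cg V E for V :: "'a set" and E +
  fixes f :: "'a \<Rightarrow> 'b"
  assumes injf: "inj f"
begin

definition "V2 = f ` V"
definition "E2 = (\<lambda>e. f ` e) ` E"

lemma img_eq: "f ` a = f ` b \<longleftrightarrow> a = b" using injf by (simp add: inj_image_eq_iff)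

lemma adj2: "adj E2 (f u) (f v) \<longleftrightarrow> adj E u v"
proof -
  have "{f u, f v} \<in> E2 \<longleftrightarrow> (\<exists>e\<in>E. f ` {u, v} = f ` e)" unfolding E2_def by auto
  also have "\<dots> \<longleftrightarrow> (\<exists>e\<in>E. {u, v} = e)" by (simp only: img_eq)
  also have "\<dots> \<longleftrightarrow> {u, v} \<in> E" by blast
  finally have "{f u, f v} \<in> E2 \<longleftrightarrow> {u, v} \<in> E" .
  moreover have "f u \<noteq> f v \<longleftrightarrow> u \<noteq> v" using injf by (auto dest: injD)
  ultimately show ?thesis unfolding adj_def by simp
qed

lemma graph2: "graph V2 E2"
proof -
  have "\<forall>x\<in>E2. x \<subseteq> V2 \<and> card x = 2"
  proof
    fix x assume "x \<in> E2"
    then obtain e where e: "e \<in> E" "x = f ` e" unfolding E2_def by blast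
    have "card (f ` e) = card e" by (rule card_image) (use injf inj_on_subset in blast)
    thus "x \<subseteq> V2 \<and> card x = 2" using e edge unfolding V2_def by auto
  qed
  moreover have "finite V2" unfolding V2_def using finV by simp
  ultimately show ?thesis unfolding graph_def by blast
qed

lemma conn2: "connected_graph V2 E2"
proof -
  have reach: "(adj E2)\<^sup>*\<^sup>* (f u) (f v)" if "(adj E)\<^sup>*\<^sup>* u v" for u v
    using that
  proof (induction rule: rtranclp_induct)
    case base then show ?case by simp
  next
    case (step y z) then show ?case using adj2 by (meson rtranclp.rtrancl_into_rtrancl)
  qed
  have cc: "\<forall>a\<in>V. \<forall>b\<in>V. (adj E)\<^sup>*\<^sup>* a b" and ne: "V \<noteq> {}" using conn unfolding connected_graph_def by simp_all
  show ?thesis unfolding connected_graph_def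
  proof (intro conjI graph2)
    show "V2 \<noteq> {}" using ne unfolding V2_def by simp
    show "\<forall>u\<in>V2. \<forall>v\<in>V2. (adj E2)\<^sup>*\<^sup>* u v" unfolding V2_def using cc reach by blast
  qed
qed

sublocale T: cg V2 E2 by unfold_locales (rule conn2)

lemma nbrs2: "v \<in> V \<Longrightarrow> nbrs V2 E2 (f v) = f ` nbrs V E v"
  unfolding nbrs_def V2_def using adj2 by auto

lemma lap2: "v \<in> V \<Longrightarrow> lap V2 E2 \<psi> (f v) = lap V E (\<lambda>x. \<psi> (f x)) v"
proof -
  assume v: "v \<in> V"
  have "lap V2 E2 \<psi> (f v) = (\<Sum>q\<in>f ` N v. \<psi> (f v) - \<psi> q)" unfolding lap_def nbrs2[OF v] ..
  also have "\<dots> = (\<Sum>u\<in>N v. \<psi> (f v) - \<psi> (f u))"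
    by (rule sum.reindex[unfolded comp_def]) (use injf inj_on_subset in blast)
  finally show ?thesis unfolding lap_def .
qed

lemma deg2: "Defs.degree E2 (f v) = Defs.degree E v"
proof -
  have mem: "\<And>e. f v \<in> f ` e \<longleftrightarrow> v \<in> e" by (rule inj_image_mem_iff[OF injf])
  have "{e2\<in>E2. f v \<in> e2} = (\<lambda>e. f ` e) ` {e\<in>E. v \<in> e}"
    unfolding E2_def using mem by blast
  moreover have "inj_on (\<lambda>e. f ` e) {e\<in>E. v \<in> e}" using img_eq by (auto intro: inj_onI)
  ultimately show ?thesis unfolding Defs.degree_def by (simp add: card_image)
qed

lemma res2: assumes i: "i \<in> V" and j: "j \<in> V"
  shows "resistance V2 E2 (f i) (f j) = resistance V E i j"
proof -
  have "(\<Sum>v\<in>V. (if v = i then 1 else 0) - (if v = j then 1 else (0::real))) = 0"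
    using i j finV by (simp add: sum_subtractf)
  then obtain \<phi> where \<phi>: "\<forall>v\<in>V. L \<phi> v = (if v = i then 1 else 0) - (if v = j then 1 else 0)"
    using exist by blast
  define \<psi> where "\<psi> = (\<lambda>y. \<phi> (inv_into UNIV f y))"
  have \<psi>f: "\<And>x. \<psi> (f x) = \<phi> x" unfolding \<psi>_def using injf by simp
  have "\<forall>w\<in>V2. lap V2 E2 \<psi> w = (if w = f i then 1 else 0) - (if w = f j then 1 else 0)"
  proof
    fix w assume "w \<in> V2"
    then obtain v where v: "v \<in> V" "w = f v" unfolding V2_def by blast
    have "lap V2 E2 \<psi> w = L \<phi> v" unfolding v(2) lap2[OF v(1)] \<psi>f ..
    also have "\<dots> = (if v = i then 1 else 0) - (if v = j then 1 else 0)" using \<phi> v by blast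
    also have "\<dots> = (if w = f i then 1 else 0) - (if w = f j then 1 else 0)"
      using injf v(2) by (auto dest: injD)
    finally show "lap V2 E2 \<psi> w = (if w = f i then 1 else 0) - (if w = f j then 1 else 0)" .
  qed
  from T.res_char[OF _ _ this] i j have "resistance V2 E2 (f i) (f j) = \<psi> (f i) - \<psi> (f j)"
    unfolding V2_def by blast
  also have "\<dots> = resistance V E i j" using res_char[OF i j \<phi>] \<psi>f by simp
  finally show ?thesis .
qed

lemma sum2: "(\<Sum>x\<in>V2. \<Sum>y\<in>V2. g x y) = (\<Sum>i\<in>V. \<Sum>j\<in>V. g (f i) (f j))"
proof -
  have inj: "inj_on f V" using injf inj_on_subset by blast
  have "(\<Sum>x\<in>V2. \<Sum>y\<in>V2. g x y) = (\<Sum>i\<in>V. \<Sum>y\<in>V2. g (f i) y)"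
    unfolding V2_def by (rule sum.reindex[OF inj, unfolded comp_def])
  also have "\<dots> = (\<Sum>i\<in>V. \<Sum>j\<in>V. g (f i) (f j))"
    unfolding V2_def by (rule sum.cong[OF refl], rule sum.reindex[OF inj, unfolded comp_def])
  finally show ?thesis .
qed

lemma idx2:
  "kirchhoff V2 E2 = kirchhoff V E"
  "add_deg_kirchhoff V2 E2 = add_deg_kirchhoff V E"
  "mult_deg_kirchhoff V2 E2 = mult_deg_kirchhoff V E"
    "card V2 = card V" "card E2 = card E"
proof -
  have r: "\<And>i j. i \<in> V \<Longrightarrow> j \<in> V \<Longrightarrow> resistance V2 E2 (f i) (f j) = resistance V E i j" by (rule res2)
  show "kirchhoff V2 E2 = kirchhoff V E" unfolding T.kirch_eq kirch_eq sum2
    by (simp add: r cong: sum.cong)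
  show "add_deg_kirchhoff V2 E2 = add_deg_kirchhoff V E" unfolding T.add_eq add_eq sum2
    by (simp add: r deg2 cong: sum.cong)
  show "mult_deg_kirchhoff V2 E2 = mult_deg_kirchhoff V E" unfolding T.mult_eq mult_eq sum2
    by (simp add: r deg2 cong: sum.cong)
  show "card V2 = card V" unfolding V2_def by (rule card_image) (use injf inj_on_subset in blast)
  show "card E2 = card E" unfolding E2_def by (rule card_image) (use img_eq in \<open>auto intro: inj_onI\<close>)
qed

end

primrec rank :: "'a sv \<Rightarrow> nat" where
  "rank (Old a) = 0"
| "rank (Mid A) = Suc (Max (insert 0 (fset (fimage rank A))))"

definition inv_rank :: "nat \<Rightarrow> 'a sv set \<Rightarrow> 'a sv set set \<Rightarrow> bool" where
  "inv_rank k V E \<longleftrightarrow> (\<forall>v\<in>V. rank v \<le> k) \<and> (\<forall>e\<in>E. \<exists>u\<in>e. rank u = k)"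

lemma rank_mu:
  assumes fin: "finite e" and le: "\<forall>u\<in>e. rank u \<le> k" and ex: "\<exists>u\<in>e. rank u = k"
  shows "rank (mu e) = Suc k"
proof -
  have "rank (mu e) = Suc (Max (insert 0 (rank ` e)))"
    unfolding mu_def using fin by (simp add: Abs_fset_inverse)
  also have "Max (insert 0 (rank ` e)) = k"
    by (rule Max_eqI) (use fin le ex in auto)
  finally show ?thesis .
qed

lemma fresh_of_inv:
  assumes cg: "connected_graph V E" and inv: "inv_rank k V E"
  shows "\<forall>e\<in>E. mu e \<notin> V"
proof
  interpret cg V E by unfold_locales (rule cg)
  fix e assume e: "e \<in> E"
  have "rank (mu e) = Suc k"
    by (rule rank_mu) (use fine[OF e] inv e edge[OF e] in \<open>auto simp: inv_rank_def\<close>)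
  thus "mu e \<notin> V" using inv unfolding inv_rank_def by fastforce
qed

lemma inv_step:
  assumes cg: "connected_graph V E" and inv: "inv_rank k V E"
  shows "inv_rank (Suc k) (fst (subdiv (V, E))) (snd (subdiv (V, E)))"
proof -
  interpret sd V E by unfold_locales (rule cg, rule fresh_of_inv[OF cg inv])
  have rk: "rank (mu e) = Suc k" if e: "e \<in> E" for e
    by (rule rank_mu) (use fine[OF e] inv e edge[OF e] in \<open>auto simp: inv_rank_def\<close>)
  have "\<forall>v\<in>V'. rank v \<le> Suc k" unfolding V'_def using inv rk unfolding inv_rank_def by fastforce
  moreover have "\<forall>x\<in>E'. \<exists>u\<in>x. rank u = Suc k" unfolding E'_def using rk by fastforce
  ultimately show ?thesis unfolding subdiv_eq inv_rank_def by simp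
qed

definition CF1 where "CF1 x R Rp Rs n m = x * R + (x * x - x) / 2 * Rp + (x * x * x - 2 * (x * x) + x) / 4 * Rs
   + (x * x * x - x) / 12 * (m * (2 * m - 2 * n + 1)) - (x * x - 1) / 6 * ((m - n) * (m - n + 1))"
definition CF2 where "CF2 x (R::real) Rp Rs n m = x * x * Rp + (x * x * x - x * x) * Rs
   + (x * x * x - x) / 3 * (m * (2 * m - 2 * n + 1)) - (x * x - 1) / 3 * ((m - n) * (m - n + 1))"
definition CF3 where "CF3 (x::real) (R::real) (Rp::real) Rs n m = x * x * x * Rs + (x * x * x - x) / 3 * (m * (2 * m - 2 * n + 1))"

lemma alg1: "2 * CF1 x R Rp Rs n m + CF2 x R Rp Rs n m + CF3 x R Rp Rs n m / 2
   + ((x * m) * (x * m) - (n + (x - 1) * m) * (n + (x - 1) * m) + (n + (x - 1) * m)) / 2 = CF1 (2 * x) R Rp Rs n m"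
  unfolding CF1_def CF2_def CF3_def by (simp add: field_simps)

lemma alg2: "4 * CF2 x R Rp Rs n m + 4 * CF3 x R Rp Rs n m
   + (3 * (x * m) * (x * m) - 2 * (x * m) * (n + (x - 1) * m) - (n + (x - 1) * m) * (n + (x - 1) * m) + (x * m) + (n + (x - 1) * m))
   = CF2 (2 * x) R Rp Rs n m"
  unfolding CF2_def CF3_def by (simp add: field_simps)

lemma alg3: "8 * CF3 x R Rp Rs n m + 2 * (x * m) * (2 * (x * m) - 2 * (n + (x - 1) * m) + 1) = CF3 (2 * x) R Rp Rs n m"
  unfolding CF3_def by (simp add: field_simps)


lemma iter:
  fixes V :: "'a set"
  assumes cgG: "connected_graph V E"
  defines "n \<equiv> real (card V)" and "m \<equiv> real (card E)"
  shows "connected_graph (fst (iter_subdiv k V E)) (snd (iter_subdiv k V E))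
    \<and> inv_rank k (fst (iter_subdiv k V E)) (snd (iter_subdiv k V E))
    \<and> real (card (fst (iter_subdiv k V E))) = n + (2 ^ k - 1) * m
    \<and> real (card (snd (iter_subdiv k V E))) = 2 ^ k * m
    \<and> kirchhoff (fst (iter_subdiv k V E)) (snd (iter_subdiv k V E))
        = CF1 (2 ^ k) (kirchhoff V E) (add_deg_kirchhoff V E) (mult_deg_kirchhoff V E) n m
    \<and> add_deg_kirchhoff (fst (iter_subdiv k V E)) (snd (iter_subdiv k V E))
        = CF2 (2 ^ k) (kirchhoff V E) (add_deg_kirchhoff V E) (mult_deg_kirchhoff V E) n m
    \<and> mult_deg_kirchhoff (fst (iter_subdiv k V E)) (snd (iter_subdiv k V E))
        = CF3 (2 ^ k) (kirchhoff V E) (add_deg_kirchhoff V E) (mult_deg_kirchhoff V E) n m"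
proof (induction k)
  case 0
  interpret I: iso V E Old by unfold_locales (rule cgG, rule injI, simp)
  have e0: "iter_subdiv 0 V E = (I.V2, I.E2)"
    unfolding iter_subdiv_def embed_def I.V2_def I.E2_def by simp
  have inv0: "inv_rank 0 I.V2 I.E2"
    unfolding inv_rank_def I.V2_def I.E2_def
  proof (intro conjI ballI)
    fix x assume "x \<in> (\<lambda>e. Old ` e) ` E"
    then obtain e where e: "e \<in> E" "x = Old ` e" by blast
    have "card e = 2" using I.edge e by blast
    then obtain a b where "e = {a, b}" unfolding card_2_iff by blast
    thus "\<exists>u\<in>x. rank u = 0" using e by auto
  qed auto
  show ?case unfolding e0 fst_conv snd_conv
    using I.conn2 inv0 I.idx2 unfolding n_def m_def CF1_def CF2_def CF3_def by simp
next
  case (Suc k)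
  define P where "P = iter_subdiv k V E"
  have IH: "connected_graph (fst P) (snd P)" "inv_rank k (fst P) (snd P)"
    "real (card (fst P)) = n + (2 ^ k - 1) * m" "real (card (snd P)) = 2 ^ k * m"
    "kirchhoff (fst P) (snd P) = CF1 (2 ^ k) (kirchhoff V E) (add_deg_kirchhoff V E) (mult_deg_kirchhoff V E) n m"
    "add_deg_kirchhoff (fst P) (snd P) = CF2 (2 ^ k) (kirchhoff V E) (add_deg_kirchhoff V E) (mult_deg_kirchhoff V E) n m"
    "mult_deg_kirchhoff (fst P) (snd P) = CF3 (2 ^ k) (kirchhoff V E) (add_deg_kirchhoff V E) (mult_deg_kirchhoff V E) n m"
    using Suc.IH unfolding P_def by auto
  interpret S: sd "fst P" "snd P" by unfold_locales (rule IH(1), rule fresh_of_inv[OF IH(1,2)])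
  have PP: "P = (fst P, snd P)" by simp
  have eS: "iter_subdiv (Suc k) V E = (S.V', S.E')"
    unfolding iter_subdiv_def using S.subdiv_eq PP unfolding P_def iter_subdiv_def by simp
  have invS: "inv_rank (Suc k) S.V' S.E'"
    using inv_step[OF IH(1,2)] S.subdiv_eq by simp
  have cV: "real (card S.V') = n + (2 ^ Suc k - 1) * m"
    using S.cardV' IH(3,4) by (simp add: algebra_simps)
  have cE: "real (card S.E') = 2 ^ Suc k * m"
    using S.cardE' IH(4) by simp
  note st = S.step[unfolded IH(3,4,5,6,7)]
  have x2: "(2::real) ^ Suc k = 2 * 2 ^ k" by simp
  show ?case unfolding eS fst_conv snd_conv
  proof (intro conjI S.connected' invS cV cE)
    show "kirchhoff S.V' S.E' = CF1 (2 ^ Suc k) (kirchhoff V E) (add_deg_kirchhoff V E) (mult_deg_kirchhoff V E) n m"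
      unfolding st(1) x2 alg1[symmetric] by (simp add: algebra_simps)
    show "add_deg_kirchhoff S.V' S.E' = CF2 (2 ^ Suc k) (kirchhoff V E) (add_deg_kirchhoff V E) (mult_deg_kirchhoff V E) n m"
      unfolding st(2) x2 alg2[symmetric] by (simp add: algebra_simps)
    show "mult_deg_kirchhoff S.V' S.E' = CF3 (2 ^ Suc k) (kirchhoff V E) (add_deg_kirchhoff V E) (mult_deg_kirchhoff V E) n m"
      unfolding st(3) x2 alg3[symmetric] by (simp add: algebra_simps)
  qed
qed

theorem theorem3p4:
  fixes V :: "'a set" and E :: "'a set set" and k :: nat
  assumes "connected_graph V E" and "card V \<ge> 2"
  defines "n \<equiv> real (card V)" and "m \<equiv> real (card E)"
  shows "kirchhoff (fst (iter_subdiv k V E)) (snd (iter_subdiv k V E))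
    = 2 ^ k * kirchhoff V E
      + (4 ^ k - 2 ^ k) / 2 * add_deg_kirchhoff V E
      + (8 ^ k - 2 * 4 ^ k + 2 ^ k) / 4 * mult_deg_kirchhoff V E
      + (8 ^ k - 2 ^ k) / 12 * (m * (2 * m - 2 * n + 1))
      - (4 ^ k - 1) / 6 * ((m - n) * (m - n + 1))"
proof -
  have "kirchhoff (fst (iter_subdiv k V E)) (snd (iter_subdiv k V E))
     = CF1 (2 ^ k) (kirchhoff V E) (add_deg_kirchhoff V E) (mult_deg_kirchhoff V E) n m"
    using iter[OF assms(1)] unfolding n_def m_def by blast
  moreover have "(4::real) ^ k = 2 ^ k * 2 ^ k" by (simp add: power_mult_distrib[symmetric])
  moreover have "(8::real) ^ k = 2 ^ k * 2 ^ k * 2 ^ k" by (simp add: power_mult_distrib[symmetric])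
  ultimately show ?thesis unfolding CF1_def by simp
qed

end
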